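(* Let $m,n \in \mathbb{N}$ with $n \geq m$. With the inverse-transform decoder $\Gamma$, alignment cost $d$, and test statistic $\phi$ with block size $k = m$ defined in the context, let $\xi,\xi'$ be i.i.d. uniform on $\Xi^n$, let $Y = \mathtt{generate}(\xi;m,p,\Gamma)$ and $\widetilde{Y} = Y$. Then almost surely $$\mathbb{P}(\phi(\widetilde{Y},\xi') \leq \phi(\widetilde{Y},\xi) \mid \widetilde{Y}) \leq 2n\exp\!\big(-k C_0^2\, \alpha(\widetilde{Y})^2/2\big).$$
   Context: Vocabulary $[N]$; $\Pi$ the permutations of $[N]$; $\Xi = [0,1]\times\Pi$; "uniform on $\Xi^n$" means all coordinates $(u_i,\pi_i)$ are independent with $u_i \sim \mathrm{Unif}([0,1])$ and $\pi_i$ uniform on $\Pi$. A language model $p$ gives next-token distributions $p(\cdot \mid x)$; $y_{:i-1}=(y_1,\dots,y_{i-1})$. Decoder: $\Gamma((u,\pi),\mu) := \pi^{-1}(\min\{\pi(i) : \mu(\{j : \pi(j)\le\pi(i)\}) \ge u\})$. $\mathtt{generate}(\xi;m,p,\Gamma)$ outputs $y\in[N]^m$ with $y_i = \Gamma(\xi_i,p(\cdot\mid y_{:i-1}))$. With $\eta(i) := (i-1)/(N-1)$, the alignment cost of a string $y$ and key sequence $(u,\pi)=((u_1,\pi_1),\dots)$ of the same length is $d(y,(u,\pi)) := -\sum_{i=1}^{|y|}(u_i-1/2)(\eta(\pi_i(y_i))-1/2)$. Test statistic with block size $k$: for $y$ of length $L \ge k$ and $\xi \in \Xi^n$, $\phi(y,\xi)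 := \min_{1\le i\le L-k+1,\ 1\le j\le n} d\big((y_{i},\dots,y_{i+k-1}),(\xi_{j},\xi_{j+1},\dots,\xi_{j+k-1})\big)$, key indices taken cyclically modulo $n$. $C_0 := \mathrm{Var}(\eta(I))$ for $I$ uniform on $[N]$. Watermark potential: $\alpha(y) := 1 - \frac{1}{|y|}\sum_{i=1}^{|y|} p(y_i\mid y_{:i-1})$. *)

theory Defs
  imports "HOL-Probability.Probability" "HOL-Combinatorics.Permutations"
begin

text \<open>Vocabulary [N] = {1..N}. Key sequences xi are functions nat => real * (nat => nat),
indexed from 0 (xi 0 is the paper's xi_1).\<close>

type_synonym key = "real \<times> (nat \<Rightarrow> nat)"

definition perms :: "nat \<Rightarrow> (nat \<Rightarrow> nat) set" where
  "perms N = {\<pi>. \<pi> permutes {1..N}}"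

definition key_measure :: "nat \<Rightarrow> key measure" where
  "key_measure N = uniform_measure lborel {0..1::real} \<Otimes>\<^sub>M uniform_count_measure (perms N)"

definition keyseq_measure :: "nat \<Rightarrow> nat \<Rightarrow> (nat \<Rightarrow> key) measure" where
  "keyseq_measure N n = PiM {..<n} (\<lambda>_. key_measure N)"

definition decode :: "nat \<Rightarrow> key \<Rightarrow> (nat \<Rightarrow> real) \<Rightarrow> nat" where
  "decode N \<xi> \<mu> = (case \<xi> of (u, \<pi>) \<Rightarrow>
      inv_into {1..N} \<pi>
        (Min {\<pi> i | i. i \<in> {1..N} \<and> (\<Sum>j\<in>{j\<in>{1..N}. \<pi> j \<le> \<pi> i}. \<mu> j) \<ge> u}))"

text \<open>Language model: p ys is the next-token distribution given the prefix ys.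
generate: y_i = Gamma(xi_i, p(. | y_{:i-1})); gen N p xi i is the length-i output.\<close>
fun gen :: "nat \<Rightarrow> (nat list \<Rightarrow> nat \<Rightarrow> real) \<Rightarrow> (nat \<Rightarrow> key) \<Rightarrow> nat \<Rightarrow> nat list" where
  "gen N p \<xi> 0 = []"
| "gen N p \<xi> (Suc i) = (let ys = gen N p \<xi> i in ys @ [decode N (\<xi> i) (p ys)])"

definition eta :: "nat \<Rightarrow> nat \<Rightarrow> real" where
  "eta N i = (real i - 1) / (real N - 1)"

definition align_cost :: "nat \<Rightarrow> nat list \<Rightarrow> (nat \<Rightarrow> key) \<Rightarrow> real" where
  "align_cost N ys \<kappa> =
     - (\<Sum>l<length ys. (fst (\<kappa> l) - 1/2) * (eta N (snd (\<kappa> l) (ys ! l)) - 1/2))"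

definition test_stat :: "nat \<Rightarrow> nat \<Rightarrow> nat \<Rightarrow> nat list \<Rightarrow> (nat \<Rightarrow> key) \<Rightarrow> real" where
  "test_stat N n k ys \<xi> =
     Min {align_cost N (take k (drop i ys)) (\<lambda>l. \<xi> ((j + l) mod n)) | i j.
            i \<le> length ys - k \<and> j < n}"

definition C0 :: "nat \<Rightarrow> real" where
  "C0 N = measure_pmf.variance (pmf_of_set {1..N}) (\<lambda>i. eta N i)"

definition wm_potential :: "(nat list \<Rightarrow> nat \<Rightarrow> real) \<Rightarrow> nat list \<Rightarrow> real" where
  "wm_potential p ys = 1 - (1 / real (length ys)) * (\<Sum>i<length ys. p (take i ys) (ys ! i))"

end

theory Submission
  imports Defs
begin



lemma perms_finite: "finite (perms N)"
  unfolding perms_def by (simp add: finite_permutations)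

lemma perms_id: "id \<in> perms N"
  unfolding perms_def by (simp add: permutes_id)

lemma perms_nonempty: "perms N \<noteq> {}"
  using perms_id by blast

lemma perms_image: "\<pi> \<in> perms N \<Longrightarrow> \<pi> ` {1..N} = {1..N}"
  unfolding perms_def by (simp add: permutes_image)

lemma perms_in: "\<pi> \<in> perms N \<Longrightarrow> x \<in> {1..N} \<Longrightarrow> \<pi> x \<in> {1..N}"
proof -
  assume "\<pi> \<in> perms N" "x \<in> {1..N}"
  then have "\<pi> permutes {1..N}" by (simp add: perms_def)
  then show ?thesis using \<open>x \<in> {1..N}\<close> by (simp only: permutes_in_image)
qed

lemma perms_inj: "\<pi> \<in> perms N \<Longrightarrow> inj \<pi>"
  unfolding perms_def by (simp add: permutes_inj)

lemma perms_transpose_left: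
  assumes "a \<in> {1..N}" "b \<in> {1..N}" "\<pi> \<in> perms N"
  shows "Transposition.transpose a b \<circ> \<pi> \<in> perms N"
  using assms unfolding perms_def by (simp add: permutes_compose permutes_swap_id)

lemma perms_transpose_right:
  assumes "a \<in> {1..N}" "b \<in> {1..N}" "\<pi> \<in> perms N"
  shows "\<pi> \<circ> Transposition.transpose a b \<in> perms N"
  using assms unfolding perms_def by (simp add: permutes_compose permutes_swap_id)

lemma card_perms_at_eq:
  assumes t: "t \<in> {1..N}" and r: "r \<in> {1..N}" and r': "r' \<in> {1..N}"
  shows "card {\<pi>\<in>perms N. \<pi> t = r} = card {\<pi>\<in>perms N. \<pi> t = r'}"
proof (rule bij_betw_same_card)
  show "bij_betw (\<lambda>\<pi>. Transposition.transpose r r' \<circ> \<pi>) {\<pi>\<in>perms N. \<pi> t = r} {\<pi>\<in>perms N. \<pi> t = r'}"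
  proof (rule bij_betw_byWitness[where f'="\<lambda>\<pi>. Transposition.transpose r r' \<circ> \<pi>"])
    have h: "Transposition.transpose r r' \<circ> \<pi> \<in> perms N" if "\<pi> \<in> perms N" for \<pi>
      using perms_transpose_left[OF r r' that] .
    have inv: "Transposition.transpose r r' \<circ> (Transposition.transpose r r' \<circ> \<pi>) = \<pi>" for \<pi> :: "nat \<Rightarrow> nat"
      by (simp add: o_assoc)
    show "\<forall>a\<in>{\<pi> \<in> perms N. \<pi> t = r}. Transposition.transpose r r' \<circ> (Transposition.transpose r r' \<circ> a) = a"
      by (simp add: o_assoc)
    show "\<forall>a\<in>{\<pi> \<in> perms N. \<pi> t = r'}. Transposition.transpose r r' \<circ> (Transposition.transpose r r' \<circ> a) = a"
      by (simp add: o_assoc)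
    show "(\<lambda>\<pi>. Transposition.transpose r r' \<circ> \<pi>) ` {\<pi> \<in> perms N. \<pi> t = r} \<subseteq> {\<pi> \<in> perms N. \<pi> t = r'}"
    proof
      fix x assume "x \<in> (\<lambda>\<pi>. Transposition.transpose r r' \<circ> \<pi>) ` {\<pi> \<in> perms N. \<pi> t = r}"
      then obtain \<pi> where "\<pi> \<in> perms N" "\<pi> t = r" "x = Transposition.transpose r r' \<circ> \<pi>" by blast
      then show "x \<in> {\<pi> \<in> perms N. \<pi> t = r'}" using h[of \<pi>] by simp
    qed
    show "(\<lambda>\<pi>. Transposition.transpose r r' \<circ> \<pi>) ` {\<pi> \<in> perms N. \<pi> t = r'} \<subseteq> {\<pi> \<in> perms N. \<pi> t = r}"
    proof
      fix x assume "x \<in> (\<lambda>\<pi>. Transposition.transpose r r' \<circ> \<pi>) ` {\<pi> \<in> perms N. \<pi> t = r'}"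
      then obtain \<pi> where "\<pi> \<in> perms N" "\<pi> t = r'" "x = Transposition.transpose r r' \<circ> \<pi>" by blast
      then show "x \<in> {\<pi> \<in> perms N. \<pi> t = r}" using h[of \<pi>] by simp
    qed
  qed
qed

lemma sum_perms_at:
  fixes G :: "nat \<Rightarrow> real"
  assumes t: "t \<in> {1..N}"
  shows "(\<Sum>\<pi>\<in>perms N. G (\<pi> t)) = real (card (perms N)) / real N * (\<Sum>r\<in>{1..N}. G r)"
proof -
  define c where "c = card {\<pi>\<in>perms N. \<pi> t = t}"
  have cr: "card {\<pi>\<in>perms N. \<pi> t = r} = c" if "r \<in> {1..N}" for r
    unfolding c_def using card_perms_at_eq[OF t that t] .
  have gen: "(\<Sum>\<pi>\<in>perms N. G (\<pi> t)) = (\<Sum>r\<in>{1..N}. G r * real c)" for G :: "nat \<Rightarrow> real"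
  proof -
    have "(\<Sum>\<pi>\<in>perms N. G (\<pi> t)) = (\<Sum>\<pi>\<in>perms N. \<Sum>r\<in>{1..N}. if \<pi> t = r then G r else 0)"
      by (intro sum.cong refl) (use perms_in[OF _ t] in auto)
    also have "\<dots> = (\<Sum>r\<in>{1..N}. \<Sum>\<pi>\<in>perms N. if \<pi> t = r then G r else 0)"
      by (rule sum.swap)
    also have "\<dots> = (\<Sum>r\<in>{1..N}. G r * real c)"
    proof (intro sum.cong refl)
      fix r assume r: "r \<in> {1..N}"
      have "(\<Sum>\<pi>\<in>perms N. if \<pi> t = r then G r else 0) = (\<Sum>\<pi>\<in>{\<pi>\<in>perms N. \<pi> t = r}. G r)"
        by (rule sum.inter_filter[symmetric]) (simp add: perms_finite)
      also have "\<dots> = G r * real c" using cr[OF r] by simp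
      finally show "(\<Sum>\<pi>\<in>perms N. if \<pi> t = r then G r else 0) = G r * real c" .
    qed
    finally show ?thesis .
  qed
  have "real (card (perms N)) = (\<Sum>\<pi>\<in>perms N. 1)" by simp
  also have "\<dots> = real N * real c" using gen[of "\<lambda>_. 1"] by simp
  finally have cc: "real (card (perms N)) = real N * real c" .
  have N0: "real N > 0" using t by auto
  have cN: "real (card (perms N)) / real N = real c" using cc N0 by simp
  show ?thesis unfolding gen[of G] cN sum_distrib_right[symmetric] by (rule mult.commute)
qed


lemma sum_r_minus1: "(\<Sum>r\<in>{1..N}. real r - 1) = real N * (real N - 1) / 2"
proof (induction N)
  case 0 then show ?case by simp
next
  case (Suc N)
  have "{1..Suc N} = insert (Suc N) {1..N}" by auto
  then have "(\<Sum>r\<in>{1..Suc N}. real r - 1) = (real (Suc N) - 1) + (\<Sum>r\<in>{1..N}. real r - 1)"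
    by simp
  also have "\<dots> = real (Suc N) * (real (Suc N) - 1) / 2" using Suc.IH by (simp add: field_simps)
  finally show ?case .
qed

lemma eta_sum:
  assumes "2 \<le> N" shows "(\<Sum>r\<in>{1..N}. eta N r) = real N / 2"
proof -
  have N1: "real N - 1 > 0" using assms by simp
  have "(\<Sum>r\<in>{1..N}. eta N r) = (\<Sum>r\<in>{1..N}. real r - 1) / (real N - 1)"
    unfolding eta_def by (simp add: sum_divide_distrib)
  also have "\<dots> = real N / 2" unfolding sum_r_minus1 using N1 by (simp add: field_simps)
  finally show ?thesis .
qed

lemma eta_centered_sum:
  assumes "2 \<le> N" shows "(\<Sum>r\<in>{1..N}. eta N r - 1/2) = 0"
  using eta_sum[OF assms] by (simp add: sum_subtractf)

lemma eta_sq_sum: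
  assumes "2 \<le> N"
  shows "(\<Sum>r\<in>{1..N}. eta N r * (eta N r - 1/2)) = (\<Sum>r\<in>{1..N}. (eta N r - 1/2)^2)"
proof -
  have "(\<Sum>r\<in>{1..N}. eta N r * (eta N r - 1/2)) = (\<Sum>r\<in>{1..N}. (eta N r - 1/2)^2 + (1/2) * (eta N r - 1/2))"
    by (intro sum.cong refl) (simp add: power2_eq_square algebra_simps)
  also have "\<dots> = (\<Sum>r\<in>{1..N}. (eta N r - 1/2)^2) + (1/2) * (\<Sum>r\<in>{1..N}. eta N r - 1/2)"
    by (simp add: sum.distrib sum_distrib_left)
  also have "\<dots> = (\<Sum>r\<in>{1..N}. (eta N r - 1/2)^2)" using eta_centered_sum[OF assms] by simp
  finally show ?thesis .
qed

lemma C0_eq: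
  assumes "2 \<le> N" shows "C0 N = (\<Sum>r\<in>{1..N}. (eta N r - 1/2)^2) / real N"
proof -
  have ne: "{1..N} \<noteq> {}" "finite {1..N}" using assms by auto
  have E: "measure_pmf.expectation (pmf_of_set {1..N}) (\<lambda>i. eta N i) = 1/2"
    using integral_pmf_of_set[OF ne] eta_sum[OF assms] assms by simp
  show ?thesis unfolding C0_def E using integral_pmf_of_set[OF ne] by simp
qed

lemma C0_nonneg: "2 \<le> N \<Longrightarrow> 0 \<le> C0 N"
  by (simp add: C0_eq sum_nonneg)


lemma h_indep:
  fixes g :: "nat \<Rightarrow> real"
  assumes t: "t \<in> {1..N}" and j: "j \<in> {1..N} - {t}" and j': "j' \<in> {1..N} - {t}"
  shows "(\<Sum>\<pi>\<in>perms N. if \<pi> j < \<pi> t then g (\<pi> t) else 0)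
       = (\<Sum>\<pi>\<in>perms N. if \<pi> j' < \<pi> t then g (\<pi> t) else 0)"
proof (rule sum.reindex_bij_witness[where i="\<lambda>\<pi>. \<pi> \<circ> Transposition.transpose j j'"
                                       and j="\<lambda>\<pi>. \<pi> \<circ> Transposition.transpose j j'"])
  fix \<pi> :: "nat \<Rightarrow> nat"
  show "\<pi> \<circ> Transposition.transpose j j' \<circ> Transposition.transpose j j' = \<pi>"
    by (simp add: o_assoc[symmetric])
  show "\<pi> \<circ> Transposition.transpose j j' \<circ> Transposition.transpose j j' = \<pi>"
    by (simp add: o_assoc[symmetric])
  assume "\<pi> \<in> perms N"
  then show "\<pi> \<circ> Transposition.transpose j j' \<in> perms N"
    using perms_transpose_right j j' by blast
next
  fix \<pi> :: "nat \<Rightarrow> nat"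
  assume "\<pi> \<in> perms N"
  then show "\<pi> \<circ> Transposition.transpose j j' \<in> perms N"
    using perms_transpose_right j j' by blast
next
  fix \<pi> :: "nat \<Rightarrow> nat"
  have tj: "t \<noteq> j" "t \<noteq> j'" using j j' by auto
  have a: "(\<pi> \<circ> Transposition.transpose j j') j' = \<pi> j" by simp
  have b: "(\<pi> \<circ> Transposition.transpose j j') t = \<pi> t" using tj by (simp add: transpose_def)
  show "(if (\<pi> \<circ> Transposition.transpose j j') j' < (\<pi> \<circ> Transposition.transpose j j') t
         then g ((\<pi> \<circ> Transposition.transpose j j') t) else 0)
       = (if \<pi> j < \<pi> t then g (\<pi> t) else 0)"
    unfolding a b ..
qed

lemma count_below:
  assumes \<pi>: "\<pi> \<in> perms N" and t: "t \<in> {1..N}"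
  shows "(\<Sum>j\<in>{1..N} - {t}. if \<pi> j < \<pi> t then (1::real) else 0) = real (\<pi> t - 1)"
proof -
  have "(\<Sum>j\<in>{1..N} - {t}. if \<pi> j < \<pi> t then (1::real) else 0) = real (card {j\<in>{1..N} - {t}. \<pi> j < \<pi> t})"
  proof -
    have "(\<Sum>j\<in>{1..N} - {t}. if \<pi> j < \<pi> t then (1::real) else 0) = (\<Sum>j\<in>{j\<in>{1..N} - {t}. \<pi> j < \<pi> t}. 1)"
      by (rule sum.inter_filter[symmetric]) simp
    then show ?thesis by simp
  qed
  also have "{j\<in>{1..N} - {t}. \<pi> j < \<pi> t} = {j\<in>{1..N}. \<pi> j < \<pi> t}" by auto
  also have "card \<dots> = card (\<pi> ` {j\<in>{1..N}. \<pi> j < \<pi> t})"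
    by (rule card_image[symmetric]) (use perms_inj[OF \<pi>] in \<open>auto simp: inj_on_def inj_def\<close>)
  also have "\<pi> ` {j\<in>{1..N}. \<pi> j < \<pi> t} = {r\<in>{1..N}. r < \<pi> t}"
  proof
    show "\<pi> ` {j\<in>{1..N}. \<pi> j < \<pi> t} \<subseteq> {r\<in>{1..N}. r < \<pi> t}"
      using perms_in[OF \<pi>] by auto
    show "{r\<in>{1..N}. r < \<pi> t} \<subseteq> \<pi> ` {j\<in>{1..N}. \<pi> j < \<pi> t}"
    proof
      fix r assume r: "r \<in> {r\<in>{1..N}. r < \<pi> t}"
      then have "r \<in> \<pi> ` {1..N}" using perms_image[OF \<pi>] by simp
      then obtain j where "j \<in> {1..N}" "r = \<pi> j" by blast
      then show "r \<in> \<pi> ` {j\<in>{1..N}. \<pi> j < \<pi> t}" using r by blast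
    qed
  qed
  also have "{r\<in>{1..N}. r < \<pi> t} = {1..<\<pi> t}" using perms_in[OF \<pi> t] by auto
  finally show ?thesis by simp
qed

lemma comb_identity:
  fixes \<mu> :: "nat \<Rightarrow> real"
  assumes N: "2 \<le> N" and t: "t \<in> {1..N}" and msum: "(\<Sum>j\<in>{1..N}. \<mu> j) = 1"
  shows "(\<Sum>\<pi>\<in>perms N. ((\<Sum>j\<in>{j\<in>{1..N}. \<pi> j < \<pi> t}. \<mu> j) + \<mu> t / 2 - 1/2) * (eta N (\<pi> t) - 1/2))
         = real (card (perms N)) * (1 - \<mu> t) * C0 N"
proof -
  define S' where "S' = {1..N} - {t}"
  define g where "g r = eta N r - 1/2" for r
  define h where "h j = (\<Sum>\<pi>\<in>perms N. if \<pi> j < \<pi> t then g (\<pi> t) else 0)" for j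
  define cp where "cp = real (card (perms N))"
  have finS': "finite S'" by (simp add: S'_def)
  have cardS': "card S' = N - 1" using t by (simp add: S'_def)
  obtain j0 where j0: "j0 \<in> S'"
  proof -
    have "card S' > 0" using cardS' N by simp
    then have "S' \<noteq> {}" by auto
    then show ?thesis using that by blast
  qed
  have heq: "h j = h j0" if "j \<in> S'" for j
    unfolding h_def using h_indep[OF t, of j j0 g] that j0 by (simp add: S'_def)
  have sumh: "(\<Sum>j\<in>S'. h j) = (real N - 1) * h j0"
  proof -
    have "(\<Sum>j\<in>S'. h j) = (\<Sum>j\<in>S'. h j0)" using heq by (rule sum.cong[OF refl])
    also have "\<dots> = real (N - 1) * h j0" using cardS' by simp
    finally show ?thesis using N by (simp add: of_nat_diff)
  qed
  have sumh2: "(\<Sum>j\<in>S'. h j) = (real N - 1) * (cp / real N * (\<Sum>r\<in>{1..N}. eta N r * g r))"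
  proof -
    have "(\<Sum>j\<in>S'. h j) = (\<Sum>\<pi>\<in>perms N. \<Sum>j\<in>S'. if \<pi> j < \<pi> t then g (\<pi> t) else 0)"
      unfolding h_def by (rule sum.swap)
    also have "\<dots> = (\<Sum>\<pi>\<in>perms N. (real N - 1) * (eta N (\<pi> t) * g (\<pi> t)))"
    proof (intro sum.cong refl)
      fix \<pi> assume \<pi>: "\<pi> \<in> perms N"
      have "(\<Sum>j\<in>S'. if \<pi> j < \<pi> t then g (\<pi> t) else 0)
          = (\<Sum>j\<in>S'. if \<pi> j < \<pi> t then (1::real) else 0) * g (\<pi> t)"
        by (subst sum_distrib_right) (intro sum.cong refl, simp)
      also have "\<dots> = real (\<pi> t - 1) * g (\<pi> t)"
        using count_below[OF \<pi> t] by (simp add: S'_def)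
      also have "real (\<pi> t - 1) = (real N - 1) * eta N (\<pi> t)"
        using perms_in[OF \<pi> t] N by (simp add: eta_def of_nat_diff)
      finally show "(\<Sum>j\<in>S'. if \<pi> j < \<pi> t then g (\<pi> t) else 0) = (real N - 1) * (eta N (\<pi> t) * g (\<pi> t))"
        by simp
    qed
    also have "\<dots> = (real N - 1) * (\<Sum>\<pi>\<in>perms N. eta N (\<pi> t) * g (\<pi> t))"
      by (simp add: sum_distrib_left)
    also have "(\<Sum>\<pi>\<in>perms N. eta N (\<pi> t) * g (\<pi> t)) = cp / real N * (\<Sum>r\<in>{1..N}. eta N r * g r)"
      unfolding cp_def by (rule sum_perms_at[OF t, of "\<lambda>r. eta N r * g r"])
    finally show ?thesis .
  qed
  have hj0: "h j0 = cp * C0 N"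
  proof -
    have "real N - 1 > 0" using N by simp
    then have ne: "real N - 1 \<noteq> 0" by simp
    have "(real N - 1) * h j0 = (real N - 1) * (cp / real N * (\<Sum>r\<in>{1..N}. eta N r * g r))"
      using sumh sumh2 by simp
    then have "h j0 = cp / real N * (\<Sum>r\<in>{1..N}. eta N r * g r)"
      using mult_left_cancel[OF ne] by blast
    also have "\<dots> = cp * C0 N"
      unfolding g_def eta_sq_sum[OF N] C0_eq[OF N] by simp
    finally show ?thesis .
  qed
  have sg: "(\<Sum>\<pi>\<in>perms N. g (\<pi> t)) = 0"
    using sum_perms_at[OF t, of g] eta_centered_sum[OF N] unfolding g_def by simp
  have ms: "(\<Sum>j\<in>S'. \<mu> j) = 1 - \<mu> t"
    using msum t sum.remove[of "{1..N}" t \<mu>] by (simp add: S'_def)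
  have "(\<Sum>\<pi>\<in>perms N. ((\<Sum>j\<in>{j\<in>{1..N}. \<pi> j < \<pi> t}. \<mu> j) + \<mu> t / 2 - 1/2) * g (\<pi> t))
      = (\<Sum>\<pi>\<in>perms N. (\<Sum>j\<in>S'. \<mu> j * (if \<pi> j < \<pi> t then g (\<pi> t) else 0)) + (\<mu> t / 2 - 1/2) * g (\<pi> t))"
  proof (intro sum.cong refl)
    fix \<pi> assume \<pi>: "\<pi> \<in> perms N"
    have "{j\<in>{1..N}. \<pi> j < \<pi> t} = {j\<in>S'. \<pi> j < \<pi> t}" by (auto simp: S'_def)
    then have f1: "(\<Sum>j\<in>{j\<in>{1..N}. \<pi> j < \<pi> t}. \<mu> j) = (\<Sum>j\<in>S'. if \<pi> j < \<pi> t then \<mu> j else 0)"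
      using finS' by (simp add: sum.inter_filter)
    have f2: "(\<Sum>j\<in>S'. if \<pi> j < \<pi> t then \<mu> j else 0) * g (\<pi> t)
       = (\<Sum>j\<in>S'. \<mu> j * (if \<pi> j < \<pi> t then g (\<pi> t) else 0))"
      by (subst sum_distrib_right) (intro sum.cong refl, simp)
    show "((\<Sum>j\<in>{j\<in>{1..N}. \<pi> j < \<pi> t}. \<mu> j) + \<mu> t / 2 - 1/2) * g (\<pi> t)
        = (\<Sum>j\<in>S'. \<mu> j * (if \<pi> j < \<pi> t then g (\<pi> t) else 0)) + (\<mu> t / 2 - 1/2) * g (\<pi> t)"
    proof -
      have e: "(X + a - b) * G = X * G + (a - b) * G" for X a b G :: real by (simp add: algebra_simps)
      show ?thesis by (simp only: e f1 f2)
    qed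
  qed
  also have "\<dots> = (\<Sum>j\<in>S'. \<mu> j * h j) + (\<mu> t / 2 - 1/2) * (\<Sum>\<pi>\<in>perms N. g (\<pi> t))"
    unfolding h_def by (simp add: sum.distrib sum_distrib_left sum.swap[of _ S'])
  also have "\<dots> = (\<Sum>j\<in>S'. \<mu> j * h j0)" using sg heq by simp
  also have "\<dots> = (1 - \<mu> t) * h j0" unfolding sum_distrib_right[symmetric] ms ..
  finally show ?thesis unfolding hj0 g_def cp_def by simp
qed


definition below :: "nat \<Rightarrow> (nat \<Rightarrow> real) \<Rightarrow> (nat \<Rightarrow> nat) \<Rightarrow> nat \<Rightarrow> real" where
  "below N \<mu> \<pi> t = (\<Sum>j\<in>{j\<in>{1..N}. \<pi> j < \<pi> t}. \<mu> j)"

lemma decode_char: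
  assumes \<pi>: "\<pi> \<in> perms N" and t: "t \<in> {1..N}"
    and nn: "\<And>j. 0 \<le> \<mu> j" and msum: "(\<Sum>j\<in>{1..N}. \<mu> j) = 1"
    and u: "0 < u" "u \<le> 1"
  shows "decode N (u, \<pi>) \<mu> = t \<longleftrightarrow> below N \<mu> \<pi> t < u \<and> u \<le> below N \<mu> \<pi> t + \<mu> t"
proof -
  define S where "S = {1..N::nat}"
  define C where "C r = (\<Sum>j\<in>{j\<in>S. \<pi> j \<le> r}. \<mu> j)" for r
  define s where "s = below N \<mu> \<pi> t"
  define M where "M = {\<pi> i | i. i \<in> {1..N} \<and> (\<Sum>j\<in>{j\<in>{1..N}. \<pi> j \<le> \<pi> i}. \<mu> j) \<ge> u}"
  have inj: "inj \<pi>" using perms_inj[OF \<pi>] .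
  have piS: "\<pi> ` S = S" unfolding S_def using perms_image[OF \<pi>] .
  have M_eq: "M = {r\<in>S. C r \<ge> u}"
  proof
    show "M \<subseteq> {r\<in>S. C r \<ge> u}" unfolding M_def C_def S_def using perms_in[OF \<pi>] by auto
    show "{r\<in>S. C r \<ge> u} \<subseteq> M"
    proof
      fix r assume r: "r \<in> {r\<in>S. C r \<ge> u}"
      then have "r \<in> \<pi> ` S" using piS by simp
      then obtain i where i: "i \<in> S" "r = \<pi> i" by blast
      then show "r \<in> M" using r unfolding M_def C_def S_def by auto
    qed
  qed
  have finM: "finite M" unfolding M_eq S_def by simp
  have CN: "C N = 1"
  proof -
    have "\<pi> j \<le> N" if "j \<in> S" for j using perms_in[OF \<pi>, of j] that unfolding S_def by simp
    then have "{j\<in>S. \<pi> j \<le> N} = S" by blast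
    then show ?thesis unfolding C_def using msum S_def by simp
  qed
  have NM: "N \<in> M" unfolding M_eq using CN u t by (auto simp: S_def)
  define m0 where "m0 = Min M"
  have m0M: "m0 \<in> M" unfolding m0_def using finM NM by (intro Min_in) auto
  have m0le: "\<And>r. r \<in> M \<Longrightarrow> m0 \<le> r" unfolding m0_def using finM by simp
  have dec: "decode N (u, \<pi>) \<mu> = inv_into S \<pi> m0"
    unfolding decode_def m0_def M_def S_def by simp
  have "m0 \<in> S" using m0M unfolding M_eq by simp
  then have m0S: "m0 \<in> \<pi> ` S" using piS by simp
  have dec_iff: "decode N (u, \<pi>) \<mu> = t \<longleftrightarrow> m0 = \<pi> t"
  proof
    assume "decode N (u, \<pi>) \<mu> = t"
    then show "m0 = \<pi> t" using f_inv_into_f[OF m0S] dec by simp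
  next
    assume "m0 = \<pi> t"
    have "inj_on \<pi> S" using inj by (rule inj_on_subset) simp
    then have "inv_into S \<pi> (\<pi> t) = t" using t unfolding S_def by (intro inv_into_f_f) (simp_all add: S_def)
    then show "decode N (u, \<pi>) \<mu> = t" using dec \<open>m0 = \<pi> t\<close> by simp
  qed
  have Ct: "C (\<pi> t) = s + \<mu> t"
  proof -
    have "{j\<in>S. \<pi> j \<le> \<pi> t} = insert t {j\<in>{1..N}. \<pi> j < \<pi> t}"
      using t unfolding S_def by (auto simp: le_less inj_eq[OF inj])
    then show ?thesis unfolding C_def s_def below_def by simp
  qed
  have Cle: "C r \<le> s" if "r < \<pi> t" for r
    unfolding C_def s_def below_def S_def
    by (rule sum_mono2) (use that nn in auto)
  have Ceq: "C (\<pi> t - 1) = s" if "\<pi> t \<ge> 2"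
  proof -
    have "{j\<in>S. \<pi> j \<le> \<pi> t - 1} = {j\<in>{1..N}. \<pi> j < \<pi> t}" using that unfolding S_def by auto
    then show ?thesis unfolding C_def s_def below_def by simp
  qed
  have "m0 = \<pi> t \<longleftrightarrow> s < u \<and> u \<le> s + \<mu> t"
  proof
    assume h: "m0 = \<pi> t"
    have "u \<le> s + \<mu> t" using m0M h Ct unfolding M_eq by simp
    moreover have "s < u"
    proof (cases "\<pi> t \<ge> 2")
      case True
      have r: "\<pi> t - 1 \<in> S" using True perms_in[OF \<pi> t] unfolding S_def by auto
      show ?thesis
      proof (rule ccontr)
        assume "\<not> s < u"
        then have "\<pi> t - 1 \<in> M" unfolding M_eq using r Ceq[OF True] by simp
        then have "m0 \<le> \<pi> t - 1" by (rule m0le)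
        then show False using h True by simp
      qed
    next
      case False
      have "\<pi> t = 1" using False perms_in[OF \<pi> t] by simp
      have "\<not> \<pi> j < \<pi> t" if "j \<in> {1..N}" for j using perms_in[OF \<pi> that] \<open>\<pi> t = 1\<close> by simp
      then have e0: "{j\<in>{1..N}. \<pi> j < \<pi> t} = {}" by blast
      have "s = 0" unfolding s_def below_def e0 by simp
      then show ?thesis using u by simp
    qed
    ultimately show "s < u \<and> u \<le> s + \<mu> t" by simp
  next
    assume h: "s < u \<and> u \<le> s + \<mu> t"
    have tM: "\<pi> t \<in> M" unfolding M_eq using h Ct perms_in[OF \<pi> t] by (simp add: S_def)
    have "\<pi> t \<le> r" if "r \<in> M" for r
    proof (rule ccontr)
      assume "\<not> \<pi> t \<le> r"
      then have "C r \<le> s" by (intro Cle) simp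
      moreover have "C r \<ge> u" using that unfolding M_eq by simp
      ultimately show False using h by simp
    qed
    then show "m0 = \<pi> t" using m0le[OF tM] m0M by (simp add: antisym)
  qed
  then show ?thesis unfolding dec_iff s_def .
qed


lemma prob_space_U: "prob_space (uniform_measure lborel {0..1::real})"
  by (rule prob_space_uniform_measure) auto

lemma prob_space_Cm: "prob_space (uniform_count_measure (perms N))"
  by (rule prob_space_uniform_count_measure[OF perms_finite perms_nonempty])

lemma prob_space_K: "prob_space (key_measure N)"
  unfolding key_measure_def
  by (intro prob_space_pair prob_space_U prob_space_Cm)

lemma space_K: "space (key_measure N) = UNIV \<times> perms N"
  unfolding key_measure_def by (simp add: space_pair_measure space_uniform_count_measure)

lemma measurable_K:
  assumes "\<And>\<pi>. \<pi> \<in> perms N \<Longrightarrow> (\<lambda>u. h (u, \<pi>)) \<in> measurable borel L"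
  shows "h \<in> measurable (key_measure N) L"
proof -
  have fm: "(\<lambda>\<kappa>. h (fst \<kappa>, \<pi>)) \<in> measurable (key_measure N) L" if "\<pi> \<in> perms N" for \<pi>
  proof (rule measurable_compose[OF _ assms[OF that]])
    have "fst \<in> measurable (key_measure N) (uniform_measure lborel {0..1::real})"
      unfolding key_measure_def by (rule measurable_fst)
    moreover have "measurable (key_measure N) (uniform_measure lborel {0..1::real}) = measurable (key_measure N) borel"
      by (rule measurable_cong_sets) simp_all
    ultimately show "fst \<in> measurable (key_measure N) borel" by simp
  qed
  have gm: "snd \<in> measurable (key_measure N) (count_space (perms N))"
  proof -
    have "snd \<in> measurable (key_measure N) (uniform_count_measure (perms N))"
      unfolding key_measure_def by (rule measurable_snd)
    moreover have "measurable (key_measure N) (uniform_count_measure (perms N)) = measurable (key_measure N) (count_space (perms N))"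
      by (rule measurable_cong_sets) (simp_all add: sets_uniform_count_measure_count_space)
    ultimately show ?thesis by simp
  qed
  have "(\<lambda>\<kappa>. (\<lambda>\<pi> \<kappa>. h (fst \<kappa>, \<pi>)) (snd \<kappa>) \<kappa>) \<in> measurable (key_measure N) L"
    by (rule measurable_compose_countable'[OF _ gm]) (use fm countable_finite[OF perms_finite] in auto)
  then show ?thesis by simp
qed

lemma decode_alt: "decode N (u, \<pi>) \<mu> = (\<lambda>A. inv_into {1..N} \<pi> (Min (\<pi> ` A)))
      {i\<in>{1..N}. (\<Sum>j\<in>{j\<in>{1..N}. \<pi> j \<le> \<pi> i}. \<mu> j) \<ge> u}"
proof -
  have "{\<pi> i | i. i \<in> {1..N} \<and> (\<Sum>j\<in>{j\<in>{1..N}. \<pi> j \<le> \<pi> i}. \<mu> j) \<ge> u}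
     = \<pi> ` {i\<in>{1..N}. (\<Sum>j\<in>{j\<in>{1..N}. \<pi> j \<le> \<pi> i}. \<mu> j) \<ge> u}" by blast
  note eq = this
  show ?thesis unfolding decode_def prod.case eq by (rule refl)
qed

lemma measurable_decode_u: "(\<lambda>u. decode N (u, \<pi>) \<mu>) \<in> measurable borel (count_space UNIV)"
proof -
  define F where "F u = {i\<in>{1..N}. (\<Sum>j\<in>{j\<in>{1..N}. \<pi> j \<le> \<pi> i}. \<mu> j) \<ge> u}" for u :: real
  have F: "F \<in> measurable borel (count_space (Pow {1..N}))"
  proof (subst measurable_count_space_eq2)
    show "finite (Pow {1..N::nat})" by simp
    show "F \<in> space borel \<rightarrow> Pow {1..N} \<and> (\<forall>a\<in>Pow {1..N}. F -` {a} \<inter> space borel \<in> sets borel)"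
    proof (intro conjI ballI)
      show "F \<in> space borel \<rightarrow> Pow {1..N}" unfolding F_def by auto
    next
      fix A assume "A \<in> Pow {1..N}"
      then have A: "A \<subseteq> {1..N}" by simp
      have "F -` {A} \<inter> space borel = {u. \<forall>i\<in>{1..N}. (i \<in> A) = ((\<Sum>j\<in>{j\<in>{1..N}. \<pi> j \<le> \<pi> i}. \<mu> j) \<ge> u)}"
      proof -
        have "F u = A \<longleftrightarrow> (\<forall>i\<in>{1..N}. (i \<in> A) = ((\<Sum>j\<in>{j\<in>{1..N}. \<pi> j \<le> \<pi> i}. \<mu> j) \<ge> u))" for u
        proof
          assume "F u = A" then show "\<forall>i\<in>{1..N}. (i \<in> A) = ((\<Sum>j\<in>{j\<in>{1..N}. \<pi> j \<le> \<pi> i}. \<mu> j) \<ge> u)"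
            unfolding F_def by blast
        next
          assume "\<forall>i\<in>{1..N}. (i \<in> A) = ((\<Sum>j\<in>{j\<in>{1..N}. \<pi> j \<le> \<pi> i}. \<mu> j) \<ge> u)"
          then show "F u = A" using A unfolding F_def by blast
        qed
        then show ?thesis by auto
      qed
      also have "\<dots> \<in> sets borel" by measurable
      finally show "F -` {A} \<inter> space borel \<in> sets borel" .
    qed
  qed
  have "(\<lambda>u. (\<lambda>A. inv_into {1..N} \<pi> (Min (\<pi> ` A))) (F u)) \<in> measurable borel (count_space UNIV)"
    by (rule measurable_compose[OF F]) simp
  then show ?thesis unfolding decode_alt F_def .
qed


lemma nn_integral_K:
  assumes h: "h \<in> borel_measurable (key_measure N)"
  shows "(\<integral>\<^sup>+\<kappa>. h \<kappa> \<partial>key_measure N)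
       = (\<Sum>\<pi>\<in>perms N. ennreal (1 / real (card (perms N))) * (\<integral>\<^sup>+u. h (u, \<pi>) * indicator {0..1} u \<partial>lborel))"
proof -
  let ?U = "uniform_measure lborel {0..1::real}"
  let ?C = "uniform_count_measure (perms N)"
  interpret U: prob_space ?U by (rule prob_space_U)
  interpret C: prob_space ?C by (rule prob_space_Cm)
  interpret P: pair_prob_space ?U ?C by unfold_locales
  have hm: "h \<in> borel_measurable (?U \<Otimes>\<^sub>M ?C)" using h unfolding key_measure_def .
  have "(\<integral>\<^sup>+\<kappa>. h \<kappa> \<partial>key_measure N) = (\<integral>\<^sup>+\<pi>. (\<integral>\<^sup>+u. h (u, \<pi>) \<partial>?U) \<partial>?C)"
    unfolding key_measure_def using P.nn_integral_snd[OF hm] by simp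
  also have "\<dots> = (\<Sum>\<pi>\<in>perms N. ennreal (1 / real (card (perms N))) * (\<integral>\<^sup>+u. h (u, \<pi>) \<partial>?U))"
    unfolding uniform_count_measure_def
    by (rule nn_integral_point_measure_finite[OF perms_finite])
  also have "\<dots> = (\<Sum>\<pi>\<in>perms N. ennreal (1 / real (card (perms N))) * (\<integral>\<^sup>+u. h (u, \<pi>) * indicator {0..1} u \<partial>lborel))"
  proof (intro sum.cong refl arg_cong2[where f="(*)"])
    fix \<pi> assume \<pi>: "\<pi> \<in> perms N"
    have "(\<lambda>u. h (u, \<pi>)) \<in> borel_measurable ?U"
      by (rule measurable_Pair1[OF hm]) (simp add: space_uniform_count_measure \<pi>)
    then have m: "(\<lambda>u. h (u, \<pi>)) \<in> borel_measurable lborel"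
      by (simp cong: measurable_cong_sets)
    show "(\<integral>\<^sup>+u. h (u, \<pi>) \<partial>?U) = (\<integral>\<^sup>+u. h (u, \<pi>) * indicator {0..1} u \<partial>lborel)"
      using nn_integral_uniform_measure[OF m, of "{0..1}"] by (simp add: divide_ennreal_def)
  qed
  finally show ?thesis .
qed

lemma AE_K: "AE \<kappa> in key_measure N. fst \<kappa> \<in> {0..1} \<and> snd \<kappa> \<in> perms N"
proof -
  define B where "B = {\<kappa> \<in> space (key_measure N). fst \<kappa> \<notin> {0..1::real}}"
  have ind: "indicator B (u, \<pi>) = (indicator (- {0..1}) u :: ennreal)" if "\<pi> \<in> perms N" for u \<pi>
    using that by (simp add: B_def space_K indicator_def)
  have hB: "(\<lambda>\<kappa>. indicator B \<kappa> :: ennreal) \<in> borel_measurable (key_measure N)"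
    by (rule measurable_K) (simp add: ind)
  then have "B \<inter> space (key_measure N) \<in> sets (key_measure N)"
    by (simp only: borel_measurable_indicator_iff)
  moreover have "B \<inter> space (key_measure N) = B" by (auto simp: B_def)
  ultimately have Bs: "B \<in> sets (key_measure N)" by simp
  have "emeasure (key_measure N) B = (\<integral>\<^sup>+\<kappa>. indicator B \<kappa> \<partial>key_measure N)"
    using Bs by simp
  also have "\<dots> = (\<Sum>\<pi>\<in>perms N. ennreal (1 / real (card (perms N))) * (\<integral>\<^sup>+u. indicator B (u, \<pi>) * indicator {0..1} u \<partial>lborel))"
    by (rule nn_integral_K[OF hB])
  also have "\<dots> = 0"
  proof (intro sum.neutral ballI)
    fix \<pi> assume "\<pi> \<in> perms N"
    then have "(\<lambda>u. indicator B (u, \<pi>) * indicator {0..1} u :: ennreal) = (\<lambda>u. 0)"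
      by (intro ext) (simp add: ind split: split_indicator)
    then show "ennreal (1 / real (card (perms N))) * (\<integral>\<^sup>+u. indicator B (u, \<pi>) * indicator {0..1} u \<partial>lborel) = 0"
      by simp
  qed
  finally have "B \<in> null_sets (key_measure N)" using Bs by auto
  then show ?thesis
    by (rule AE_I') (auto simp: B_def space_K)
qed



definition Tc :: "nat \<Rightarrow> key \<Rightarrow> nat \<Rightarrow> real" where
  "Tc N \<kappa> t = (fst \<kappa> - 1/2) * (eta N (snd \<kappa> t) - 1/2)"

lemma eta_bounds:
  assumes "2 \<le> N" "r \<in> {1..N}" shows "0 \<le> eta N r" "eta N r \<le> 1"
  using assms by (auto simp: eta_def field_simps)

lemma Tc_bound:
  assumes N: "2 \<le> N" and t: "t \<in> {1..N}" and \<pi>: "\<pi> \<in> perms N" and u: "u \<in> {0..1}"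
  shows "\<bar>Tc N (u, \<pi>) t\<bar> \<le> 1/4"
proof -
  have e: "0 \<le> eta N (\<pi> t)" "eta N (\<pi> t) \<le> 1" using eta_bounds[OF N perms_in[OF \<pi> t]] by auto
  have a: "\<bar>u - 1/2\<bar> \<le> 1/2" by (rule abs_leI) (use u in auto)
  have b: "\<bar>eta N (\<pi> t) - 1/2\<bar> \<le> 1/2" by (rule abs_leI) (use e in auto)
  have "\<bar>Tc N (u, \<pi>) t\<bar> = \<bar>u - 1/2\<bar> * \<bar>eta N (\<pi> t) - 1/2\<bar>" by (simp add: Tc_def abs_mult)
  also have "\<dots> \<le> (1/2) * (1/2)" by (rule mult_mono[OF a b]) auto
  finally show ?thesis by simp
qed

lemma affine_integral:
  fixes a b c :: real
  assumes "a \<le> b"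
  shows "((\<lambda>u. (u - 1/2) * c + 1/4) has_integral (c * ((b - 1/2)^2 - (a - 1/2)^2) / 2 + (b - a) / 4)) {a..b}"
proof -
  define F where "F u = c * (u - 1/2)^2 / 2 + u / 4" for u :: real
  have "((\<lambda>u. (u - 1/2) * c + 1/4) has_integral (F b - F a)) {a..b}"
  proof (rule fundamental_theorem_of_calculus[OF assms])
    fix x :: real
    have "(F has_real_derivative ((x - 1/2) * c + 1/4)) (at x within {a..b})"
      unfolding F_def by (auto intro!: derivative_eq_intros simp: power2_eq_square field_simps)
    then show "(F has_vector_derivative ((x - 1/2) * c + 1/4)) (at x within {a..b})"
      by (simp add: has_real_derivative_iff_has_vector_derivative)
  qed
  also have "F b - F a = c * ((b - 1/2)^2 - (a - 1/2)^2) / 2 + (b - a) / 4"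
    unfolding F_def by (simp add: field_simps)
  finally show ?thesis .
qed

lemma below_bounds:
  assumes \<pi>: "\<pi> \<in> perms N" and t: "t \<in> {1..N}"
    and nn: "\<And>j. 0 \<le> \<mu> j" and msum: "(\<Sum>j\<in>{1..N}. \<mu> j) = 1"
  shows "0 \<le> below N \<mu> \<pi> t" "below N \<mu> \<pi> t + \<mu> t \<le> 1"
proof -
  show "0 \<le> below N \<mu> \<pi> t" unfolding below_def by (rule sum_nonneg) (use nn in auto)
  have "below N \<mu> \<pi> t + \<mu> t = (\<Sum>j\<in>insert t {j\<in>{1..N}. \<pi> j < \<pi> t}. \<mu> j)"
    unfolding below_def by simp
  also have "\<dots> \<le> (\<Sum>j\<in>{1..N}. \<mu> j)" by (rule sum_mono2) (use t nn in auto)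
  finally show "below N \<mu> \<pi> t + \<mu> t \<le> 1" using msum by simp
qed

lemma ind_E:
  assumes \<pi>: "\<pi> \<in> perms N" and t: "t \<in> {1..N}"
    and nn: "\<And>j. 0 \<le> \<mu> j" and msum: "(\<Sum>j\<in>{1..N}. \<mu> j) = 1"
    and u0: "u \<noteq> 0" and us: "u \<noteq> below N \<mu> \<pi> t"
  shows "(u \<in> {0..1} \<and> decode N (u, \<pi>) \<mu> = t) \<longleftrightarrow> u \<in> {below N \<mu> \<pi> t .. below N \<mu> \<pi> t + \<mu> t}"
proof (cases "u \<in> {0..1}")
  case True
  then have "0 < u" "u \<le> 1" using u0 by auto
  from decode_char[OF \<pi> t nn msum this] show ?thesis using True us by auto
next
  case False
  then show ?thesis using below_bounds[OF \<pi> t nn msum] by auto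
qed

lemma per_pi_E:
  assumes \<pi>: "\<pi> \<in> perms N" and t: "t \<in> {1..N}"
    and nn: "\<And>j. 0 \<le> \<mu> j" and msum: "(\<Sum>j\<in>{1..N}. \<mu> j) = 1"
  shows "(\<integral>\<^sup>+u. g u * indicator {\<kappa>\<in>space (key_measure N). decode N \<kappa> \<mu> = t} (u, \<pi>) * indicator {0..1} u \<partial>lborel)
       = (\<integral>\<^sup>+u. indicator {below N \<mu> \<pi> t .. below N \<mu> \<pi> t + \<mu> t} u * g u \<partial>lborel)"
proof (rule nn_integral_cong_AE)
  show "AE u in lborel. g u * indicator {\<kappa>\<in>space (key_measure N). decode N \<kappa> \<mu> = t} (u, \<pi>) * indicator {0..1} u
        = indicator {below N \<mu> \<pi> t .. below N \<mu> \<pi> t + \<mu> t} u * g u"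
    using AE_lborel_singleton[of 0] AE_lborel_singleton[of "below N \<mu> \<pi> t"]
  proof eventually_elim
    case (elim u)
    have "indicator {\<kappa>\<in>space (key_measure N). decode N \<kappa> \<mu> = t} (u, \<pi>) * indicator {0..1} u
        = (indicator {below N \<mu> \<pi> t .. below N \<mu> \<pi> t + \<mu> t} u :: ennreal)"
    proof -
      have "(u, \<pi>) \<in> {\<kappa>\<in>space (key_measure N). decode N \<kappa> \<mu> = t} \<longleftrightarrow> decode N (u, \<pi>) \<mu> = t"
        using \<pi> by (simp add: space_K)
      then show ?thesis using ind_E[OF \<pi> t nn msum elim] by (auto split: split_indicator)
    qed
    note eq = this
    show ?case by (simp only: mult.assoc eq) (rule mult.commute)
  qed
qed


abbreviation Ev :: "nat \<Rightarrow> (nat \<Rightarrow> real) \<Rightarrow> nat \<Rightarrow> key set" where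
  "Ev N \<mu> t \<equiv> {\<kappa>\<in>space (key_measure N). decode N \<kappa> \<mu> = t}"

lemma affine_nonneg:
  assumes N: "2 \<le> N" and t: "t \<in> {1..N}" and \<pi>: "\<pi> \<in> perms N" and v: "v \<in> {0..1}"
  shows "0 \<le> (v - 1/2) * (eta N (\<pi> t) - 1/2) + 1/4"
  using Tc_bound[OF N t \<pi> v] by (simp add: Tc_def abs_le_iff)

lemma V1:
  assumes \<pi>: "\<pi> \<in> perms N" and t: "t \<in> {1..N}"
    and nn: "\<And>j. 0 \<le> \<mu> j" and msum: "(\<Sum>j\<in>{1..N}. \<mu> j) = 1"
  shows "(\<integral>\<^sup>+u. indicator (Ev N \<mu> t) (u, \<pi>) * indicator {0..1} u \<partial>lborel) = ennreal (\<mu> t)"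
proof -
  have "(\<integral>\<^sup>+u. indicator (Ev N \<mu> t) (u, \<pi>) * indicator {0..1} u \<partial>lborel)
      = (\<integral>\<^sup>+u. (\<lambda>_. 1) u * indicator (Ev N \<mu> t) (u, \<pi>) * indicator {0..1} u \<partial>lborel)" by simp
  also have "\<dots> = (\<integral>\<^sup>+u. indicator {below N \<mu> \<pi> t .. below N \<mu> \<pi> t + \<mu> t} u * 1 \<partial>lborel)"
    by (rule per_pi_E[OF \<pi> t nn msum])
  also have "\<dots> = ennreal (\<mu> t)" using nn[of t] by simp
  finally show ?thesis .
qed

lemma V2:
  assumes N: "2 \<le> N" and \<pi>: "\<pi> \<in> perms N" and t: "t \<in> {1..N}"
    and nn: "\<And>j. 0 \<le> \<mu> j" and msum: "(\<Sum>j\<in>{1..N}. \<mu> j) = 1"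
  shows "(\<integral>\<^sup>+u. (ennreal (Tc N (u, \<pi>) t + 1/4) * indicator (Ev N \<mu> t) (u, \<pi>)) * indicator {0..1} u \<partial>lborel)
       = ennreal (\<mu> t * (below N \<mu> \<pi> t + \<mu> t / 2 - 1/2) * (eta N (\<pi> t) - 1/2) + \<mu> t / 4)"
proof -
  define s where "s = below N \<mu> \<pi> t"
  define c where "c = eta N (\<pi> t) - 1/2"
  define q where "q = \<mu> t"
  have sb: "0 \<le> s" "s + q \<le> 1" using below_bounds[OF \<pi> t nn msum] unfolding s_def q_def by auto
  have q0: "0 \<le> q" using nn unfolding q_def by simp
  have e1: "(\<integral>\<^sup>+u. (ennreal (Tc N (u, \<pi>) t + 1/4) * indicator (Ev N \<mu> t) (u, \<pi>)) * indicator {0..1} u \<partial>lborel)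
      = (\<integral>\<^sup>+u. indicator {s .. s + q} u * ennreal ((u - 1/2) * c + 1/4) \<partial>lborel)"
    using per_pi_E[OF \<pi> t nn msum, of "\<lambda>u. ennreal (Tc N (u, \<pi>) t + 1/4)"]
    unfolding s_def q_def c_def by (simp add: Tc_def)
  have e2: "(\<integral>\<^sup>+u. indicator {s .. s + q} u * ennreal ((u - 1/2) * c + 1/4) \<partial>lborel)
     = (\<integral>\<^sup>+u. ennreal (indicator {s .. s + q} u * ((u - 1/2) * c + 1/4)) \<partial>lborel)"
    by (intro nn_integral_cong) (simp split: split_indicator)
  have e3: "(\<integral>\<^sup>+u. ennreal (indicator {s .. s + q} u * ((u - 1/2) * c + 1/4)) \<partial>lborel)
     = ennreal (c * ((s + q - 1/2)^2 - (s - 1/2)^2) / 2 + (s + q - s) / 4)"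
  proof (rule nn_integral_has_integral_lebesgue)
    show "((\<lambda>u. (u - 1/2) * c + 1/4) has_integral (c * ((s + q - 1/2)^2 - (s - 1/2)^2) / 2 + (s + q - s) / 4)) {s..s + q}"
      by (rule affine_integral) (use q0 in simp)
    fix u assume "u \<in> {s..s + q}"
    then have "u \<in> {0..1}" using sb by auto
    then show "0 \<le> (u - 1/2) * c + 1/4" unfolding c_def by (rule affine_nonneg[OF N t \<pi>])
  qed
  have e4: "c * ((s + q - 1/2)^2 - (s - 1/2)^2) / 2 + (s + q - s) / 4 = q * (s + q / 2 - 1/2) * c + q / 4"
    by (simp add: power2_eq_square field_simps)
  have "(\<integral>\<^sup>+u. (ennreal (Tc N (u, \<pi>) t + 1/4) * indicator (Ev N \<mu> t) (u, \<pi>)) * indicator {0..1} u \<partial>lborel)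
       = ennreal (q * (s + q / 2 - 1/2) * c + q / 4)" unfolding e1 e2 e3 e4 ..
  then show ?thesis by (simp only: s_def q_def c_def)
qed

lemma V3:
  assumes N: "2 \<le> N" and \<pi>: "\<pi> \<in> perms N" and t: "t \<in> {1..N}"
  shows "(\<integral>\<^sup>+u. ennreal (Tc N (u, \<pi>) t + 1/4) * indicator {0..1} u \<partial>lborel) = ennreal (1/4)"
proof -
  define c where "c = eta N (\<pi> t) - 1/2"
  have "(\<integral>\<^sup>+u. ennreal (Tc N (u, \<pi>) t + 1/4) * indicator {0..1} u \<partial>lborel)
      = (\<integral>\<^sup>+u. indicator {0..1} u * ennreal ((u - 1/2) * c + 1/4) \<partial>lborel)"
    by (simp add: Tc_def c_def mult.commute)
  also have "\<dots> = (\<integral>\<^sup>+u. ennreal (indicator {0..1} u * ((u - 1/2) * c + 1/4)) \<partial>lborel)"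
    by (intro nn_integral_cong) (simp split: split_indicator)
  also have "\<dots> = ennreal (c * ((1 - 1/2)^2 - (0 - 1/2)^2) / 2 + (1 - 0) / 4)"
  proof (rule nn_integral_has_integral_lebesgue)
    show "((\<lambda>u. (u - 1/2) * c + 1/4) has_integral (c * ((1 - 1/2)^2 - (0 - 1/2)^2) / 2 + (1 - 0) / 4)) {0..1}"
      by (rule affine_integral) simp
    fix u :: real assume "u \<in> {0..1}"
    then show "0 \<le> (u - 1/2) * c + 1/4" unfolding c_def by (rule affine_nonneg[OF N t \<pi>])
  qed
  also have "ennreal (c * ((1 - 1/2)^2 - (0 - 1/2)^2) / 2 + (1 - 0) / 4) = ennreal (1/4::real)"
    by (simp add: power2_eq_square)
  finally show ?thesis .
qed

lemma measurable_decode_K: "(\<lambda>\<kappa>. decode N \<kappa> \<mu>) \<in> measurable (key_measure N) (count_space UNIV)"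
proof -
  have "(\<lambda>\<kappa>. decode N (fst \<kappa>, snd \<kappa>) \<mu>) \<in> measurable (key_measure N) (count_space UNIV)"
    by (rule measurable_K) (simp add: measurable_decode_u)
  then show ?thesis by simp
qed

lemma Ev_sets: "Ev N \<mu> t \<in> sets (key_measure N)"
proof -
  have "(\<lambda>\<kappa>. decode N \<kappa> \<mu>) -` {t} \<inter> space (key_measure N) \<in> sets (key_measure N)"
    by (rule measurable_sets[OF measurable_decode_K]) simp
  moreover have "(\<lambda>\<kappa>. decode N \<kappa> \<mu>) -` {t} \<inter> space (key_measure N) = Ev N \<mu> t" by auto
  ultimately show ?thesis by simp
qed

lemma measurable_Tc: "(\<lambda>\<kappa>. Tc N \<kappa> t) \<in> borel_measurable (key_measure N)"
proof -
  have "(\<lambda>\<kappa>. Tc N (fst \<kappa>, snd \<kappa>) t) \<in> borel_measurable (key_measure N)"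
    by (rule measurable_K) (simp add: Tc_def)
  then show ?thesis by simp
qed

lemma sum_perms_ennreal:
  assumes "\<And>\<pi>. \<pi> \<in> perms N \<Longrightarrow> 0 \<le> x \<pi>"
  shows "(\<Sum>\<pi>\<in>perms N. ennreal (1 / real (card (perms N))) * ennreal (x \<pi>))
       = ennreal ((\<Sum>\<pi>\<in>perms N. x \<pi>) / real (card (perms N)))"
proof -
  have "(\<Sum>\<pi>\<in>perms N. ennreal (1 / real (card (perms N))) * ennreal (x \<pi>))
      = (\<Sum>\<pi>\<in>perms N. ennreal (x \<pi> / real (card (perms N))))"
    by (intro sum.cong refl) (simp add: ennreal_mult[symmetric] assms)
  also have "\<dots> = ennreal (\<Sum>\<pi>\<in>perms N. x \<pi> / real (card (perms N)))"
    by (rule sum_ennreal) (simp add: assms)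
  finally show ?thesis by (simp add: sum_divide_distrib)
qed

lemma K1:
  assumes t: "t \<in> {1..N}" and nn: "\<And>j. 0 \<le> \<mu> j" and msum: "(\<Sum>j\<in>{1..N}. \<mu> j) = 1"
  shows "emeasure (key_measure N) (Ev N \<mu> t) = ennreal (\<mu> t)"
proof -
  have hm: "(\<lambda>\<kappa>. indicator (Ev N \<mu> t) \<kappa> :: ennreal) \<in> borel_measurable (key_measure N)"
    using Ev_sets by simp
  have "emeasure (key_measure N) (Ev N \<mu> t) = (\<integral>\<^sup>+\<kappa>. indicator (Ev N \<mu> t) \<kappa> \<partial>key_measure N)"
    using Ev_sets by simp
  also have "\<dots> = (\<Sum>\<pi>\<in>perms N. ennreal (1 / real (card (perms N))) * ennreal (\<mu> t))"
    unfolding nn_integral_K[OF hm] by (intro sum.cong refl) (simp add: V1[OF _ t nn msum])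
  also have "\<dots> = ennreal ((\<Sum>\<pi>\<in>perms N. \<mu> t) / real (card (perms N)))"
    by (rule sum_perms_ennreal) (simp add: nn)
  also have "\<dots> = ennreal (\<mu> t)" using perms_finite perms_nonempty by simp
  finally show ?thesis .
qed

lemma K2:
  assumes N: "2 \<le> N" and t: "t \<in> {1..N}" and nn: "\<And>j. 0 \<le> \<mu> j" and msum: "(\<Sum>j\<in>{1..N}. \<mu> j) = 1"
  shows "(\<integral>\<^sup>+\<kappa>. ennreal (Tc N \<kappa> t + 1/4) * indicator (Ev N \<mu> t) \<kappa> \<partial>key_measure N)
       = ennreal (\<mu> t * (1 - \<mu> t) * C0 N + \<mu> t / 4)"
proof -
  have hm: "(\<lambda>\<kappa>. ennreal (Tc N \<kappa> t + 1/4) * indicator (Ev N \<mu> t) \<kappa>) \<in> borel_measurable (key_measure N)"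
    using Ev_sets measurable_Tc by measurable
  define x where "x \<pi> = \<mu> t * (below N \<mu> \<pi> t + \<mu> t / 2 - 1/2) * (eta N (\<pi> t) - 1/2) + \<mu> t / 4" for \<pi>
  have x0: "0 \<le> x \<pi>" if \<pi>: "\<pi> \<in> perms N" for \<pi>
  proof -
    have v: "below N \<mu> \<pi> t + \<mu> t / 2 \<in> {0..1}"
      using below_bounds[OF \<pi> t nn msum] nn[of t] by auto
    have "x \<pi> = \<mu> t * ((below N \<mu> \<pi> t + \<mu> t / 2 - 1/2) * (eta N (\<pi> t) - 1/2) + 1/4)"
      unfolding x_def by (simp add: algebra_simps)
    also have "\<dots> \<ge> 0" using affine_nonneg[OF N t \<pi> v] nn[of t] by simp
    finally show ?thesis .
  qed
  have "(\<integral>\<^sup>+\<kappa>. ennreal (Tc N \<kappa> t + 1/4) * indicator (Ev N \<mu> t) \<kappa> \<partial>key_measure N)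
      = (\<Sum>\<pi>\<in>perms N. ennreal (1 / real (card (perms N))) * ennreal (x \<pi>))"
    unfolding nn_integral_K[OF hm] x_def by (intro sum.cong refl) (simp add: V2[OF N _ t nn msum])
  also have "\<dots> = ennreal ((\<Sum>\<pi>\<in>perms N. x \<pi>) / real (card (perms N)))"
    by (rule sum_perms_ennreal) (simp add: x0)
  also have "(\<Sum>\<pi>\<in>perms N. x \<pi>) = \<mu> t * (\<Sum>\<pi>\<in>perms N. (below N \<mu> \<pi> t + \<mu> t / 2 - 1/2) * (eta N (\<pi> t) - 1/2))
        + real (card (perms N)) * (\<mu> t / 4)"
    unfolding x_def by (simp add: sum.distrib sum_distrib_left mult.assoc)
  also have "(\<Sum>\<pi>\<in>perms N. (below N \<mu> \<pi> t + \<mu> t / 2 - 1/2) * (eta N (\<pi> t) - 1/2))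
      = real (card (perms N)) * (1 - \<mu> t) * C0 N"
    unfolding below_def by (rule comb_identity[OF N t msum])
  also have "(\<mu> t * (real (card (perms N)) * (1 - \<mu> t) * C0 N) + real (card (perms N)) * (\<mu> t / 4)) / real (card (perms N))
      = \<mu> t * (1 - \<mu> t) * C0 N + \<mu> t / 4"
    using perms_finite perms_nonempty by (simp add: field_simps)
  finally show ?thesis .
qed

lemma K3:
  assumes N: "2 \<le> N" and t: "t \<in> {1..N}"
  shows "(\<integral>\<^sup>+\<kappa>. ennreal (Tc N \<kappa> t + 1/4) \<partial>key_measure N) = ennreal (1/4)"
proof -
  have hm: "(\<lambda>\<kappa>. ennreal (Tc N \<kappa> t + 1/4)) \<in> borel_measurable (key_measure N)"
    using measurable_Tc by measurable
  have "(\<integral>\<^sup>+\<kappa>. ennreal (Tc N \<kappa> t + 1/4) \<partial>key_measure N)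
      = (\<Sum>\<pi>\<in>perms N. ennreal (1 / real (card (perms N))) * ennreal (1/4))"
    unfolding nn_integral_K[OF hm] by (intro sum.cong refl) (simp add: V3[OF N _ t])
  also have "\<dots> = ennreal ((\<Sum>\<pi>\<in>perms N. 1/4) / real (card (perms N)))"
    by (rule sum_perms_ennreal) simp
  also have "\<dots> = ennreal (1/4)" using perms_finite perms_nonempty by simp
  finally show ?thesis .
qed


lemma AE_Tc_bound:
  assumes N: "2 \<le> N" and t: "t \<in> {1..N}"
  shows "AE \<kappa> in key_measure N. Tc N \<kappa> t \<in> {-1/4..1/4}"
  using AE_K
proof eventually_elim
  case (elim \<kappa>)
  then have "\<bar>Tc N (fst \<kappa>, snd \<kappa>) t\<bar> \<le> 1/4" using Tc_bound[OF N t] by blast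
  then have "Tc N (fst \<kappa>, snd \<kappa>) t \<le> 1/4 \<and> - Tc N (fst \<kappa>, snd \<kappa>) t \<le> 1/4" by (simp only: abs_le_iff)
  moreover have "Tc N (fst \<kappa>, snd \<kappa>) t = Tc N \<kappa> t" by simp
  ultimately show ?case unfolding atLeastAtMost_iff by linarith
qed

lemma hoeff_free:
  assumes N: "2 \<le> N" and t: "t \<in> {1..N}" and l: "0 \<le> l"
  shows "(\<integral>\<^sup>+\<kappa>. ennreal (exp (l * Tc N \<kappa> t)) \<partial>key_measure N) \<le> ennreal (exp (l^2 / 32))"
proof -
  interpret K: prob_space "key_measure N" by (rule prob_space_K)
  interpret ib: interval_bounded_random_variable "key_measure N" "\<lambda>\<kappa>. Tc N \<kappa> t" "-1/4" "1/4"
  proof unfold_locales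
    show "(\<lambda>\<kappa>. Tc N \<kappa> t) \<in> borel_measurable (key_measure N)" by (rule measurable_Tc)
    show "AE \<kappa> in key_measure N. Tc N \<kappa> t \<in> {-1/4..1/4}" by (rule AE_Tc_bound[OF N t])
  qed
  have int: "integrable (key_measure N) (\<lambda>\<kappa>. Tc N \<kappa> t + 1/4)"
    using ib.integrable by simp
  have nn: "AE \<kappa> in key_measure N. 0 \<le> Tc N \<kappa> t + 1/4"
    using AE_Tc_bound[OF N t] by eventually_elim simp
  have "ennreal (K.expectation (\<lambda>\<kappa>. Tc N \<kappa> t + 1/4)) = ennreal (1/4)"
    using nn_integral_eq_integral[OF int nn] K3[OF N t] by simp
  moreover have "0 \<le> K.expectation (\<lambda>\<kappa>. Tc N \<kappa> t + 1/4)"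
    by (rule integral_nonneg_AE[OF nn])
  ultimately have "K.expectation (\<lambda>\<kappa>. Tc N \<kappa> t + 1/4) = 1/4" by simp
  moreover have "K.expectation (\<lambda>\<kappa>. Tc N \<kappa> t + 1/4) = K.expectation (\<lambda>\<kappa>. Tc N \<kappa> t) + 1/4"
    using ib.integrable by (simp add: K.prob_space)
  ultimately have E0: "K.expectation (\<lambda>\<kappa>. Tc N \<kappa> t) = 0" by simp
  show ?thesis
  proof (cases "l = 0")
    case True
    then show ?thesis by (simp add: K.emeasure_space_1)
  next
    case False
    then have "l > 0" using l by simp
    from ib.Hoeffdings_lemma_nn_integral[OF this] show ?thesis
      unfolding E0 by (simp add: power2_eq_square)
  qed
qed

lemma hoeff_cond:
  assumes N: "2 \<le> N" and t: "t \<in> {1..N}" and nn: "\<And>j. 0 \<le> \<mu> j" and msum: "(\<Sum>j\<in>{1..N}. \<mu> j) = 1"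
    and l: "0 \<le> l"
  shows "(\<integral>\<^sup>+\<kappa>. indicator (Ev N \<mu> t) \<kappa> * ennreal (exp (- l * Tc N \<kappa> t)) \<partial>key_measure N)
       \<le> ennreal (\<mu> t) * ennreal (exp (- l * (1 - \<mu> t) * C0 N + l^2 / 32))"
proof -
  interpret K: prob_space "key_measure N" by (rule prob_space_K)
  have em: "emeasure (key_measure N) (Ev N \<mu> t) = ennreal (\<mu> t)" by (rule K1[OF t nn msum])
  have q1: "\<mu> t \<le> 1"
  proof -
    have "\<mu> t \<le> (\<Sum>j\<in>{1..N}. \<mu> j)" by (rule member_le_sum) (use t nn in auto)
    then show ?thesis using msum by simp
  qed
  have fm: "(\<lambda>\<kappa>. ennreal (exp (- l * Tc N \<kappa> t))) \<in> borel_measurable (key_measure N)"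
    using measurable_Tc by measurable
  show ?thesis
  proof (cases "\<mu> t = 0")
    case True
    then have "Ev N \<mu> t \<in> null_sets (key_measure N)" using em Ev_sets by auto
    then have "AE \<kappa> in key_measure N. \<kappa> \<notin> Ev N \<mu> t" by (rule AE_not_in)
    then have "(\<integral>\<^sup>+\<kappa>. indicator (Ev N \<mu> t) \<kappa> * ennreal (exp (- l * Tc N \<kappa> t)) \<partial>key_measure N) = (\<integral>\<^sup>+\<kappa>. 0 \<partial>key_measure N)"
      by (intro nn_integral_cong_AE) (auto elim!: eventually_mono)
    then show ?thesis by simp
  next
    case qne: False
    then have q0: "0 < \<mu> t" using nn[of t] by simp
    show ?thesis
    proof (cases "l = 0")
      case True
      have "(\<integral>\<^sup>+\<kappa>. indicator (Ev N \<mu> t) \<kappa> * ennreal (exp (- l * Tc N \<kappa> t)) \<partial>key_measure N)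
          = emeasure (key_measure N) (Ev N \<mu> t)"
        using True Ev_sets by simp
      then show ?thesis using True em by simp
    next
      case False
      then have l0: "0 < l" using l by simp
      let ?KE = "uniform_measure (key_measure N) (Ev N \<mu> t)"
      have emne: "emeasure (key_measure N) (Ev N \<mu> t) \<noteq> 0" "emeasure (key_measure N) (Ev N \<mu> t) \<noteq> \<infinity>"
        using em q0 by auto
      interpret KE: prob_space ?KE by (rule prob_space_uniform_measure[OF emne])
      have mcong: "measurable ?KE borel = measurable (key_measure N) borel"
        by (rule measurable_cong_sets) simp_all
      have AEKE: "AE \<kappa> in ?KE. Tc N \<kappa> t \<in> {-1/4..1/4}"
        by (rule AE_uniform_measureI[OF Ev_sets]) (rule eventually_mono[OF AE_Tc_bound[OF N t]], blast)
      interpret ib: interval_bounded_random_variable ?KE "\<lambda>\<kappa>. - Tc N \<kappa> t" "-1/4" "1/4"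
      proof unfold_locales
        show "(\<lambda>\<kappa>. - Tc N \<kappa> t) \<in> borel_measurable ?KE"
          unfolding mcong using measurable_Tc by measurable
        show "AE \<kappa> in ?KE. - Tc N \<kappa> t \<in> {-1/4..1/4}"
          using AEKE by eventually_elim auto
      qed
      have tm: "(\<lambda>\<kappa>. Tc N \<kappa> t) \<in> borel_measurable (key_measure N)" by (rule measurable_Tc)
      have intT: "integrable ?KE (\<lambda>\<kappa>. Tc N \<kappa> t)"
        using integrable_minus[OF ib.integrable] by simp
      have int: "integrable ?KE (\<lambda>\<kappa>. Tc N \<kappa> t + 1/4)"
        using intT by simp
      have nnT: "AE \<kappa> in ?KE. 0 \<le> Tc N \<kappa> t + 1/4"
        using AEKE by eventually_elim simp
      have f4m: "(\<lambda>\<kappa>. ennreal (Tc N \<kappa> t + 1/4)) \<in> borel_measurable (key_measure N)"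
        using tm by measurable
      have "(\<integral>\<^sup>+\<kappa>. ennreal (Tc N \<kappa> t + 1/4) \<partial>?KE)
          = (\<integral>\<^sup>+\<kappa>. ennreal (Tc N \<kappa> t + 1/4) * indicator (Ev N \<mu> t) \<kappa> \<partial>key_measure N) / emeasure (key_measure N) (Ev N \<mu> t)"
        by (rule nn_integral_uniform_measure[OF f4m Ev_sets])
      also have "\<dots> = ennreal (\<mu> t * (1 - \<mu> t) * C0 N + \<mu> t / 4) / ennreal (\<mu> t)"
        unfolding K2[OF N t nn msum] em ..
      also have "\<dots> = ennreal ((1 - \<mu> t) * C0 N + 1/4)"
      proof -
        have nnv: "0 \<le> \<mu> t * (1 - \<mu> t) * C0 N + \<mu> t / 4"
          using q0 q1 C0_nonneg[OF N] by simp
        have "(\<mu> t * (1 - \<mu> t) * C0 N + \<mu> t / 4) / \<mu> t = (1 - \<mu> t) * C0 N + 1/4"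
          using q0 by (simp add: field_simps)
        then show ?thesis by (simp add: divide_ennreal[OF nnv q0])
      qed
      finally have "ennreal (KE.expectation (\<lambda>\<kappa>. Tc N \<kappa> t + 1/4)) = ennreal ((1 - \<mu> t) * C0 N + 1/4)"
        using nn_integral_eq_integral[OF int nnT] by simp
      moreover have "0 \<le> KE.expectation (\<lambda>\<kappa>. Tc N \<kappa> t + 1/4)"
        by (rule integral_nonneg_AE[OF nnT])
      moreover have "0 \<le> (1 - \<mu> t) * C0 N + 1/4" using q1 C0_nonneg[OF N] by simp
      ultimately have "KE.expectation (\<lambda>\<kappa>. Tc N \<kappa> t + 1/4) = (1 - \<mu> t) * C0 N + 1/4" by simp
      moreover have "KE.expectation (\<lambda>\<kappa>. Tc N \<kappa> t + 1/4) = KE.expectation (\<lambda>\<kappa>. Tc N \<kappa> t) + 1/4"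
      proof -
        have ps: "measure ?KE (space (key_measure N)) = 1" using KE.prob_space by simp
        show ?thesis using intT by (simp add: ps)
      qed
      ultimately have ET: "KE.expectation (\<lambda>\<kappa>. - Tc N \<kappa> t) = - ((1 - \<mu> t) * C0 N)" by simp
      define e where "e = (1 - \<mu> t) * C0 N"
      have H: "(\<integral>\<^sup>+\<kappa>. ennreal (exp (l * (- Tc N \<kappa> t + e))) \<partial>?KE) \<le> ennreal (exp (l^2 / 32))"
        using ib.Hoeffdings_lemma_nn_integral[OF l0] unfolding ET e_def by (simp add: power2_eq_square)
      have "(\<integral>\<^sup>+\<kappa>. ennreal (exp (- l * Tc N \<kappa> t)) \<partial>?KE)
          = (\<integral>\<^sup>+\<kappa>. ennreal (exp (l * (- Tc N \<kappa> t + e))) * ennreal (exp (- l * e)) \<partial>?KE)"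
        by (intro nn_integral_cong) (simp add: ennreal_mult[symmetric] exp_add[symmetric] algebra_simps)
      also have "\<dots> = (\<integral>\<^sup>+\<kappa>. ennreal (exp (l * (- Tc N \<kappa> t + e))) \<partial>?KE) * ennreal (exp (- l * e))"
        by (rule nn_integral_multc) (unfold mcong, use tm in measurable)
      also have "\<dots> \<le> ennreal (exp (l^2 / 32)) * ennreal (exp (- l * e))"
        by (rule mult_right_mono[OF H]) simp
      finally have HE: "(\<integral>\<^sup>+\<kappa>. ennreal (exp (- l * Tc N \<kappa> t)) \<partial>?KE) \<le> ennreal (exp (l^2 / 32)) * ennreal (exp (- l * e))" .
      have "(\<integral>\<^sup>+\<kappa>. ennreal (exp (- l * Tc N \<kappa> t)) \<partial>?KE)
          = (\<integral>\<^sup>+\<kappa>. ennreal (exp (- l * Tc N \<kappa> t)) * indicator (Ev N \<mu> t) \<kappa> \<partial>key_measure N) / ennreal (\<mu> t)"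
        using nn_integral_uniform_measure[OF fm Ev_sets[of N \<mu> t]] unfolding em .
      then have "(\<integral>\<^sup>+\<kappa>. ennreal (exp (- l * Tc N \<kappa> t)) * indicator (Ev N \<mu> t) \<kappa> \<partial>key_measure N)
          = (\<integral>\<^sup>+\<kappa>. ennreal (exp (- l * Tc N \<kappa> t)) \<partial>?KE) * ennreal (\<mu> t)"
        using q0 by (simp add: ennreal_divide_times)
      also have "\<dots> \<le> ennreal (exp (l^2 / 32)) * ennreal (exp (- l * e)) * ennreal (\<mu> t)"
        by (rule mult_right_mono[OF HE]) simp
      also have "\<dots> = ennreal (\<mu> t) * ennreal (exp (- l * (1 - \<mu> t) * C0 N + l^2 / 32))"
        unfolding e_def by (simp add: ennreal_mult[symmetric] exp_add[symmetric] mult.commute mult.left_commute)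
      finally show ?thesis by (simp add: mult.commute)
    qed
  qed
qed



lemma prod_mono_ennreal: "(\<And>i. i \<in> A \<Longrightarrow> (f i::ennreal) \<le> g i) \<Longrightarrow> prod f A \<le> prod g A"
  by (induction A rule: infinite_finite_induct) (auto intro!: mult_mono)

lemma gen_length: "length (gen N p \<xi> k) = k"
  by (induction k) (simp_all add: Let_def)

lemma gen_eq:
  "length y = k \<Longrightarrow> gen N p \<xi> k = y \<longleftrightarrow> (\<forall>i<k. decode N (\<xi> i) (p (take i y)) = y ! i)"
proof (induction k arbitrary: y)
  case 0 then show ?case by simp
next
  case (Suc k)
  have ty: "length (take k y) = k" using Suc.prems by simp
  have yeq: "y = take k y @ [y ! k]" using Suc.prems
    by (metis lessI take_Suc_conv_app_nth take_all order_refl)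
  have "gen N p \<xi> (Suc k) = y \<longleftrightarrow> gen N p \<xi> k = take k y \<and> decode N (\<xi> k) (p (gen N p \<xi> k)) = y ! k"
  proof -
    have "gen N p \<xi> (Suc k) = gen N p \<xi> k @ [decode N (\<xi> k) (p (gen N p \<xi> k))]" by (simp add: Let_def)
    then have "gen N p \<xi> (Suc k) = y \<longleftrightarrow> gen N p \<xi> k @ [decode N (\<xi> k) (p (gen N p \<xi> k))] = take k y @ [y ! k]"
      using yeq by simp
    also have "\<dots> \<longleftrightarrow> gen N p \<xi> k = take k y \<and> decode N (\<xi> k) (p (gen N p \<xi> k)) = y ! k"
      using gen_length[of N p \<xi> k] ty by simp
    finally show ?thesis .
  qed
  also have "\<dots> \<longleftrightarrow> (\<forall>i<k. decode N (\<xi> i) (p (take i y)) = y ! i) \<and> decode N (\<xi> k) (p (take k y)) = y ! k"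
    using Suc.IH[OF ty] by (auto simp: min_def)
  also have "\<dots> \<longleftrightarrow> (\<forall>i<Suc k. decode N (\<xi> i) (p (take i y)) = y ! i)"
    by (auto simp: less_Suc_eq)
  finally show ?case .
qed

lemma align_cost_Tc: "align_cost N ys \<kappa> = - (\<Sum>l<length ys. Tc N (\<kappa> l) (ys ! l))"
  unfolding align_cost_def Tc_def ..

lemma test_stat_eq:
  assumes "length ys = m" "1 \<le> n"
  shows "test_stat N n m ys \<xi> = Min ((\<lambda>j. align_cost N ys (\<lambda>l. \<xi> ((j + l) mod n))) ` {..<n})"
proof -
  have "{align_cost N (take m (drop i ys)) (\<lambda>l. \<xi> ((j + l) mod n)) | i j. i \<le> length ys - m \<and> j < n}
      = (\<lambda>j. align_cost N ys (\<lambda>l. \<xi> ((j + l) mod n))) ` {..<n}"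
    using assms by auto
  then show ?thesis unfolding test_stat_def by simp
qed

lemma test_stat_le0:
  assumes "length ys = m" "m \<le> n" "1 \<le> m"
  shows "test_stat N n m ys \<xi> \<le> - (\<Sum>l<m. Tc N (\<xi> l) (ys ! l))"
proof -
  have n1: "1 \<le> n" using assms by simp
  have "test_stat N n m ys \<xi> \<le> align_cost N ys (\<lambda>l. \<xi> ((0 + l) mod n))"
    unfolding test_stat_eq[OF assms(1) n1]
  proof (rule Min_le)
    show "align_cost N ys (\<lambda>l. \<xi> ((0 + l) mod n)) \<in> (\<lambda>j. align_cost N ys (\<lambda>l. \<xi> ((j + l) mod n))) ` {..<n}"
      by (rule imageI) (use n1 in simp)
  qed simp
  also have "\<dots> = - (\<Sum>l<m. Tc N (\<xi> l) (ys ! l))"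
    unfolding align_cost_Tc using assms by (intro arg_cong[where f=uminus] sum.cong) auto
  finally show ?thesis .
qed

lemma test_stat_attained:
  assumes "length ys = m" "1 \<le> n"
  shows "\<exists>j<n. test_stat N n m ys \<xi> = - (\<Sum>l<m. Tc N (\<xi> ((j + l) mod n)) (ys ! l))"
proof -
  have "test_stat N n m ys \<xi> \<in> (\<lambda>j. align_cost N ys (\<lambda>l. \<xi> ((j + l) mod n))) ` {..<n}"
  proof -
    have "{..<n} \<noteq> {}" using assms(2) by (simp add: lessThan_empty_iff)
    then show ?thesis unfolding test_stat_eq[OF assms] by (intro Min_in) auto
  qed
  then show ?thesis unfolding align_cost_Tc using assms by auto
qed

lemma nn_integral_pair_prod:
  assumes M1: "sigma_finite_measure M1" and M2: "sigma_finite_measure M2"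
    and f: "f \<in> borel_measurable M1" and g: "g \<in> borel_measurable M2"
  shows "(\<integral>\<^sup>+\<omega>. f (fst \<omega>) * g (snd \<omega>) \<partial>(M1 \<Otimes>\<^sub>M M2)) = (\<integral>\<^sup>+x. f x \<partial>M1) * (\<integral>\<^sup>+y. g y \<partial>M2)"
proof -
  interpret M2: sigma_finite_measure M2 by (rule M2)
  have m: "(\<lambda>\<omega>. f (fst \<omega>) * g (snd \<omega>)) \<in> borel_measurable (M1 \<Otimes>\<^sub>M M2)" using f g by measurable
  have "(\<integral>\<^sup>+\<omega>. f (fst \<omega>) * g (snd \<omega>) \<partial>(M1 \<Otimes>\<^sub>M M2)) = (\<integral>\<^sup>+x. \<integral>\<^sup>+y. f x * g y \<partial>M2 \<partial>M1)"
    using M2.nn_integral_fst[OF m] by simp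
  also have "\<dots> = (\<integral>\<^sup>+x. f x * (\<integral>\<^sup>+y. g y \<partial>M2) \<partial>M1)"
    by (intro nn_integral_cong nn_integral_cmult g)
  also have "\<dots> = (\<integral>\<^sup>+x. f x \<partial>M1) * (\<integral>\<^sup>+y. g y \<partial>M2)"
    by (rule nn_integral_multc[OF f])
  finally show ?thesis .
qed

lemma nn_integral_KS_prod:
  fixes \<sigma> :: "nat \<Rightarrow> nat" and f :: "nat \<Rightarrow> key \<Rightarrow> ennreal"
  assumes inj: "inj_on \<sigma> {..<m}" and rng: "\<sigma> ` {..<m} \<subseteq> {..<n}"
    and meas: "\<And>l. l < m \<Longrightarrow> f l \<in> borel_measurable (key_measure N)"
  shows "(\<integral>\<^sup>+\<xi>. (\<Prod>l<m. f l (\<xi> (\<sigma> l))) \<partial>keyseq_measure N n) = (\<Prod>l<m. \<integral>\<^sup>+\<kappa>. f l \<kappa> \<partial>key_measure N)"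
proof -
  interpret PP: product_prob_space "\<lambda>_. key_measure N" "{..<n}"
    by (simp add: product_prob_space_def product_prob_space_axioms_def product_sigma_finite_def
        prob_space_K prob_space_imp_sigma_finite)
  define \<tau> where "\<tau> = the_inv_into {..<m} \<sigma>"
  define G where "G k = (if k \<in> \<sigma> ` {..<m} then f (\<tau> k) else (\<lambda>_. 1))" for k
  have \<tau>\<sigma>: "\<tau> (\<sigma> l) = l" if "l < m" for l
    unfolding \<tau>_def using the_inv_into_f_f[OF inj] that by simp
  have Gm: "G k \<in> borel_measurable (key_measure N)" for k
  proof (cases "k \<in> \<sigma> ` {..<m}")
    case True
    then obtain l where "l < m" "k = \<sigma> l" by auto
    then show ?thesis using meas \<tau>\<sigma> by (simp add: G_def)
  next
    case False then show ?thesis by (simp add: G_def)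
  qed
  have pw: "(\<Prod>l<m. f l (\<xi> (\<sigma> l))) = (\<Prod>k<n. G k (\<xi> k))" for \<xi> :: "nat \<Rightarrow> key"
  proof -
    have "(\<Prod>k<n. G k (\<xi> k)) = (\<Prod>k\<in>\<sigma> ` {..<m}. G k (\<xi> k))"
      by (rule prod.mono_neutral_right) (use rng in \<open>auto simp: G_def\<close>)
    also have "\<dots> = (\<Prod>l<m. G (\<sigma> l) (\<xi> (\<sigma> l)))"
      by (rule prod.reindex[OF inj, unfolded comp_def])
    also have "\<dots> = (\<Prod>l<m. f l (\<xi> (\<sigma> l)))"
      by (intro prod.cong refl) (simp add: G_def \<tau>\<sigma>)
    finally show ?thesis by simp
  qed
  have "(\<integral>\<^sup>+\<xi>. (\<Prod>l<m. f l (\<xi> (\<sigma> l))) \<partial>keyseq_measure N n) = (\<integral>\<^sup>+\<xi>. (\<Prod>k<n. G k (\<xi> k)) \<partial>keyseq_measure N n)"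
    unfolding pw ..
  also have "\<dots> = (\<Prod>k<n. \<integral>\<^sup>+\<kappa>. G k \<kappa> \<partial>key_measure N)"
    unfolding keyseq_measure_def by (rule PP.product_nn_integral_prod) (simp_all add: Gm)
  also have "\<dots> = (\<Prod>k\<in>\<sigma> ` {..<m}. \<integral>\<^sup>+\<kappa>. G k \<kappa> \<partial>key_measure N)"
    by (rule prod.mono_neutral_right) (use rng in \<open>auto simp: G_def prob_space.emeasure_space_1[OF prob_space_K]\<close>)
  also have "\<dots> = (\<Prod>l<m. \<integral>\<^sup>+\<kappa>. G (\<sigma> l) \<kappa> \<partial>key_measure N)"
    by (rule prod.reindex[OF inj, unfolded comp_def])
  also have "\<dots> = (\<Prod>l<m. \<integral>\<^sup>+\<kappa>. f l \<kappa> \<partial>key_measure N)"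
    by (intro prod.cong refl) (simp add: G_def \<tau>\<sigma>)
  finally show ?thesis .
qed



lemma mod_shift_inj:
  fixes j l l' n :: nat
  assumes "l < n" "l' < n" "(j + l) mod n = (j + l') mod n"
  shows "l = l'"
proof -
  have key: "a = b" if "a < n" "b < n" "b \<le> a" "(j + a) mod n = (j + b) mod n" for a b :: nat
  proof -
    have "n dvd (j + a) - (j + b)" using that mod_eq_dvd_iff_nat[of "j + b" "j + a" n] by simp
    then have d: "n dvd a - b" by simp
    show "a = b"
    proof (rule ccontr)
      assume "a \<noteq> b"
      then have "0 < a - b" using that by simp
      then have "n \<le> a - b" using d by (rule dvd_imp_le[rotated])
      then show False using that by simp
    qed
  qed
  show ?thesis
  proof (cases "l' \<le> l")
    case True then show ?thesis using key[of l l'] assms by simp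
  next
    case False then show ?thesis using key[of l' l] assms by simp
  qed
qed

lemma decode_in_S:
  assumes \<pi>: "\<pi> \<in> perms N" and N: "1 \<le> N" and u: "u \<le> 1"
    and nn: "\<And>j. 0 \<le> \<mu> j" and msum: "(\<Sum>j\<in>{1..N}. \<mu> j) = 1"
  shows "decode N (u, \<pi>) \<mu> \<in> {1..N}"
proof -
  define F where "F = {i\<in>{1..N}. (\<Sum>j\<in>{j\<in>{1..N}. \<pi> j \<le> \<pi> i}. \<mu> j) \<ge> u}"
  have "N \<in> \<pi> ` {1..N}" using perms_image[OF \<pi>] N by simp
  then obtain i0 where i0: "i0 \<in> {1..N}" "\<pi> i0 = N" by blast
  have leN: "\<pi> j \<le> N" if "j \<in> {1..N}" for j using perms_in[OF \<pi> that] by simp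
  have "{j\<in>{1..N}. \<pi> j \<le> \<pi> i0} = {1..N}" using leN i0(2) by auto
  then have "i0 \<in> F" unfolding F_def using i0 msum u by simp
  then have ne: "\<pi> ` F \<noteq> {}" by blast
  have fin: "finite (\<pi> ` F)" unfolding F_def by simp
  have "Min (\<pi> ` F) \<in> \<pi> ` F" by (rule Min_in[OF fin ne])
  then have "Min (\<pi> ` F) \<in> \<pi> ` {1..N}" unfolding F_def by blast
  then have "inv_into {1..N} \<pi> (Min (\<pi> ` F)) \<in> {1..N}" by (rule inv_into_into)
  then show ?thesis unfolding decode_alt F_def .
qed

lemma Ev_null_outside:
  assumes N: "1 \<le> N" and t: "t \<notin> {1..N}" and nn: "\<And>j. 0 \<le> \<mu> j" and msum: "(\<Sum>j\<in>{1..N}. \<mu> j) = 1"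
  shows "emeasure (key_measure N) (Ev N \<mu> t) = 0"
proof -
  have "AE \<kappa> in key_measure N. \<kappa> \<notin> Ev N \<mu> t"
    using AE_K
  proof eventually_elim
    case (elim \<kappa>)
    have "decode N (fst \<kappa>, snd \<kappa>) \<mu> \<in> {1..N}"
      by (rule decode_in_S[OF _ N _ nn msum]) (use elim in auto)
    then have "decode N \<kappa> \<mu> \<noteq> t" using t by auto
    then show ?case by simp
  qed
  then show ?thesis
    by (subst (asm) AE_iff_measurable[OF Ev_sets]) auto
qed

lemma ennreal_exp_prod:
  "(\<Prod>i\<in>A. ennreal (exp (f i))) = ennreal (exp (\<Sum>i\<in>A. f i))"
proof (cases "finite A")
  case True
  then show ?thesis by (simp add: prod_ennreal exp_sum)
next
  case False then show ?thesis by simp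
qed


lemma space_KS: "\<xi> \<in> space (keyseq_measure N n) \<Longrightarrow> i < n \<Longrightarrow> \<xi> i \<in> space (key_measure N)"
  unfolding keyseq_measure_def by (auto simp: space_PiM PiE_def Pi_def)

lemma prob_space_KS: "prob_space (keyseq_measure N n)"
  unfolding keyseq_measure_def by (rule prob_space_PiM) (rule prob_space_K)

lemma measurable_KS_comp:
  assumes "f \<in> borel_measurable (key_measure N)" "i < n"
  shows "(\<lambda>\<xi>. f (\<xi> i)) \<in> borel_measurable (keyseq_measure N n)"
proof -
  have c: "(\<lambda>x. x i) \<in> measurable (PiM {..<n} (\<lambda>_. key_measure N)) (key_measure N)"
    using measurable_component_singleton[of i "{..<n}" "\<lambda>_. key_measure N"] assms(2) by simp
  show ?thesis unfolding keyseq_measure_def by (rule measurable_compose[OF c assms(1)])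
qed

theorem lemma4:
  fixes N m n :: nat and p :: "nat list \<Rightarrow> nat \<Rightarrow> real" and y :: "nat list"
  assumes N: "2 \<le> N"
    and m: "1 \<le> m" and nm: "m \<le> n"
    and p_nonneg: "\<And>xs i. 0 \<le> p xs i"
    and p_sum: "\<And>xs. (\<Sum>i\<in>{1..N}. p xs i) = 1"
    and pos: "\<P>(\<omega> in keyseq_measure N n \<Otimes>\<^sub>M keyseq_measure N n.
                 gen N p (fst \<omega>) m = y) > 0"
  shows "\<P>(\<omega> in keyseq_measure N n \<Otimes>\<^sub>M keyseq_measure N n.
            test_stat N n m (gen N p (fst \<omega>) m) (snd \<omega>)
              \<le> test_stat N n m (gen N p (fst \<omega>) m) (fst \<omega>)
          \<bar> gen N p (fst \<omega>) m = y)
         \<le> 2 * real n * exp (- real m * (C0 N)\<^sup>2 * (wm_potential p y)\<^sup>2 / 2)"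
proof -
  let ?KS = "keyseq_measure N n"
  let ?K = "key_measure N"
  let ?\<Omega> = "?KS \<Otimes>\<^sub>M ?KS"
  let ?B = "{\<omega> \<in> space ?\<Omega>. gen N p (fst \<omega>) m = y}"
  let ?AB = "{\<omega> \<in> space ?\<Omega>. test_stat N n m (gen N p (fst \<omega>) m) (snd \<omega>)
              \<le> test_stat N n m (gen N p (fst \<omega>) m) (fst \<omega>) \<and> gen N p (fst \<omega>) m = y}"
  have n1: "1 \<le> n" using m nm by simp
  have N1: "1 \<le> N" using N by simp
  interpret KS: prob_space ?KS by (rule prob_space_KS)
  interpret K: prob_space ?K by (rule prob_space_K)
  interpret \<Omega>: pair_prob_space ?KS ?KS by unfold_locales
  have sfKS: "sigma_finite_measure ?KS" by (rule KS.sigma_finite_measure_axioms)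
  have PB: "measure ?\<Omega> ?B > 0" using pos by simp
  have Bs: "?B \<in> sets ?\<Omega>"
  proof (rule ccontr)
    assume "?B \<notin> sets ?\<Omega>"
    then have "measure ?\<Omega> ?B = 0" by (rule measure_notin_sets)
    then show False using PB by simp
  qed
  have ly: "length y = m"
  proof (rule ccontr)
    assume "length y \<noteq> m"
    then have "gen N p \<xi> m \<noteq> y" for \<xi> using gen_length[of N p \<xi> m] by auto
    then have Be: "?B = {}" by auto
    show False using PB unfolding Be by simp
  qed
  define \<mu> where "\<mu> i = p (take i y)" for i
  define q where "q i = \<mu> i (y ! i)" for i
  have \<mu>nn: "\<And>j. 0 \<le> \<mu> i j" for i unfolding \<mu>_def by (rule p_nonneg)
  have \<mu>sum: "(\<Sum>j\<in>{1..N}. \<mu> i j) = 1" for i unfolding \<mu>_def by (rule p_sum)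
  define f0 where "f0 i \<kappa> = (indicator (Ev N (\<mu> i) (y ! i)) \<kappa> :: ennreal)" for i \<kappa>
  have f0m: "f0 i \<in> borel_measurable ?K" for i unfolding f0_def using Ev_sets by simp
  have genB: "gen N p \<xi> m = y \<longleftrightarrow> (\<forall>i<m. decode N (\<xi> i) (\<mu> i) = y ! i)" for \<xi>
    using gen_eq[OF ly] unfolding \<mu>_def by simp
  have indB: "indicator ?B \<omega> = (\<Prod>i<m. f0 i (fst \<omega> (id i))) * (\<lambda>_. 1::ennreal) (snd \<omega>)"
    if \<omega>: "\<omega> \<in> space ?\<Omega>" for \<omega>
  proof -
    have sp: "fst \<omega> i \<in> space ?K" if "i < m" for i
      using \<omega> that nm space_KS[of "fst \<omega>" N n i] by (auto simp: space_pair_measure)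
    show ?thesis
    proof (cases "\<omega> \<in> ?B")
      case True
      then have "\<forall>i<m. decode N (fst \<omega> i) (\<mu> i) = y ! i" using genB by simp
      then have "f0 i (fst \<omega> i) = 1" if "i < m" for i using that sp[OF that] by (simp add: f0_def)
      then show ?thesis using True by simp
    next
      case False
      then obtain i where i: "i < m" "decode N (fst \<omega> i) (\<mu> i) \<noteq> y ! i" using genB \<omega> by auto
      then have "f0 i (fst \<omega> i) = 0" by (simp add: f0_def)
      then have "(\<Prod>i<m. f0 i (fst \<omega> (id i))) = 0" using i by (intro prod_zero) auto
      then show ?thesis using False by simp
    qed
  qed
  have emB: "emeasure ?\<Omega> ?B = (\<Prod>i<m. emeasure ?K (Ev N (\<mu> i) (y ! i)))"
  proof -
    have "emeasure ?\<Omega> ?B = (\<integral>\<^sup>+\<omega>. indicator ?B \<omega> \<partial>?\<Omega>)" using Bs by simp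
    also have "\<dots> = (\<integral>\<^sup>+\<omega>. (\<Prod>i<m. f0 i (fst \<omega> (id i))) * (\<lambda>_. 1::ennreal) (snd \<omega>) \<partial>?\<Omega>)"
      by (rule nn_integral_cong) (rule indB)
    also have "\<dots> = (\<integral>\<^sup>+\<xi>. (\<Prod>i<m. f0 i (\<xi> (id i))) \<partial>?KS) * (\<integral>\<^sup>+\<xi>. 1 \<partial>?KS)"
    proof (rule nn_integral_pair_prod[OF sfKS sfKS])
      show "(\<lambda>\<xi>. \<Prod>i<m. f0 i (\<xi> (id i))) \<in> borel_measurable ?KS"
        using nm by (intro borel_measurable_prod_ennreal measurable_KS_comp f0m) auto
    qed simp
    also have "(\<integral>\<^sup>+\<xi>. (\<Prod>i<m. f0 i (\<xi> (id i))) \<partial>?KS) = (\<Prod>i<m. \<integral>\<^sup>+\<kappa>. f0 i \<kappa> \<partial>?K)"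
      by (rule nn_integral_KS_prod) (use nm f0m in auto)
    also have "(\<integral>\<^sup>+\<xi>. 1 \<partial>?KS) = 1" by (simp add: KS.emeasure_space_1)
    also have "(\<Prod>i<m. \<integral>\<^sup>+\<kappa>. f0 i \<kappa> \<partial>?K) = (\<Prod>i<m. emeasure ?K (Ev N (\<mu> i) (y ! i)))"
      by (intro prod.cong refl) (simp add: f0_def Ev_sets)
    finally show ?thesis by simp
  qed
  have yS: "y ! i \<in> {1..N}" if "i < m" for i
  proof (rule ccontr)
    assume "y ! i \<notin> {1..N}"
    then have "emeasure ?K (Ev N (\<mu> i) (y ! i)) = 0" by (rule Ev_null_outside[OF N1 _ \<mu>nn \<mu>sum])
    then have "emeasure ?\<Omega> ?B = 0" unfolding emB using that by (intro prod_zero) auto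
    then show False using PB by (simp add: measure_def)
  qed
  have q01: "0 \<le> q i" "q i \<le> 1" if "i < m" for i
  proof -
    show "0 \<le> q i" unfolding q_def by (rule \<mu>nn)
    have "q i \<le> (\<Sum>j\<in>{1..N}. \<mu> i j)" unfolding q_def
      by (rule member_le_sum) (use yS[OF that] \<mu>nn in auto)
    then show "q i \<le> 1" using \<mu>sum by simp
  qed
  have emB2: "emeasure ?\<Omega> ?B = ennreal (\<Prod>i<m. q i)"
  proof -
    have "emeasure ?\<Omega> ?B = (\<Prod>i<m. ennreal (q i))"
      unfolding emB q_def using K1[OF yS \<mu>nn \<mu>sum] by simp
    also have "\<dots> = ennreal (\<Prod>i<m. q i)" by (rule prod_ennreal) (use q01 in simp)
    finally show ?thesis .
  qed
  have mB: "measure ?\<Omega> ?B = (\<Prod>i<m. q i)"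
  proof -
    have "0 \<le> (\<Prod>i<m. q i)" by (rule prod_nonneg) (use q01 in simp)
    then show ?thesis using emB2 by (simp add: measure_def)
  qed
  define \<alpha> where "\<alpha> = wm_potential p y"
  have alpha: "real m * \<alpha> = (\<Sum>i<m. 1 - q i)"
  proof -
    have "wm_potential p y = 1 - (1 / real m) * (\<Sum>i<m. q i)"
      unfolding wm_potential_def ly q_def \<mu>_def ..
    then have "real m * \<alpha> = real m - (\<Sum>i<m. q i)" unfolding \<alpha>_def using m by (simp add: field_simps)
    also have "\<dots> = (\<Sum>i<m. 1 - q i)" by (simp add: sum_subtractf)
    finally show ?thesis .
  qed
  have \<alpha>0: "0 \<le> \<alpha>"
  proof -
    have "0 \<le> (\<Sum>i<m. 1 - q i)" by (rule sum_nonneg) (use q01 in auto)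
    then have "0 \<le> real m * \<alpha>" using alpha by simp
    then show ?thesis using m by (simp add: zero_le_mult_iff)
  qed
  have C00: "0 \<le> C0 N" by (rule C0_nonneg[OF N])
  define lam where "lam = 8 * \<alpha> * C0 N"
  have lam0: "0 \<le> lam" unfolding lam_def using \<alpha>0 C00 by simp
  define hF where "hF i \<kappa> = f0 i \<kappa> * ennreal (exp (- lam * Tc N \<kappa> (y ! i)))" for i \<kappa>
  define hG where "hG l \<kappa> = ennreal (exp (lam * Tc N \<kappa> (y ! l)))" for l \<kappa>
  define \<sigma> where "\<sigma> j l = (j + l) mod n" for j l
  define F where "F \<xi> = (\<Prod>i<m. hF i (\<xi> (id i)))" for \<xi> :: "nat \<Rightarrow> key"
  define G where "G j \<xi> = (\<Prod>l<m. hG l (\<xi> (\<sigma> j l)))" for j and \<xi> :: "nat \<Rightarrow> key"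
  have hFm: "hF i \<in> borel_measurable ?K" for i
    unfolding hF_def using f0m[of i] measurable_Tc[of N "y ! i"] by measurable
  have hGm: "hG l \<in> borel_measurable ?K" for l
    unfolding hG_def using measurable_Tc[of N "y ! l"] by measurable
  have \<sigma>n: "\<sigma> j l < n" for j l unfolding \<sigma>_def using n1 by simp
  have \<sigma>inj: "inj_on (\<sigma> j) {..<m}" for j
    unfolding \<sigma>_def inj_on_def
  proof (intro ballI impI)
    fix x y assume "x \<in> {..<m}" "y \<in> {..<m}" "(j + x) mod n = (j + y) mod n"
    then show "x = y" using nm by (intro mod_shift_inj[of x n y j]) auto
  qed
  have Fm: "F \<in> borel_measurable ?KS"
    unfolding F_def using nm by (intro borel_measurable_prod_ennreal measurable_KS_comp hFm) auto
  have Gm: "G j \<in> borel_measurable ?KS" for j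
    unfolding G_def by (intro borel_measurable_prod_ennreal measurable_KS_comp hGm \<sigma>n)
  define a where "a i = - lam * (1 - q i) * C0 N + lam^2 / 32" for i
  define b where "b = lam^2 / 32"
  have intF: "(\<integral>\<^sup>+\<xi>. F \<xi> \<partial>?KS) \<le> ennreal ((\<Prod>i<m. q i) * exp (\<Sum>i<m. a i))"
  proof -
    have "(\<integral>\<^sup>+\<xi>. F \<xi> \<partial>?KS) = (\<Prod>i<m. \<integral>\<^sup>+\<kappa>. hF i \<kappa> \<partial>?K)"
      unfolding F_def by (rule nn_integral_KS_prod) (use nm hFm in auto)
    also have "\<dots> \<le> (\<Prod>i<m. ennreal (q i) * ennreal (exp (a i)))"
    proof (rule prod_mono_ennreal)
      fix i assume "i \<in> {..<m}"
      then have i: "i < m" by simp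
      show "(\<integral>\<^sup>+\<kappa>. hF i \<kappa> \<partial>?K) \<le> ennreal (q i) * ennreal (exp (a i))"
        using hoeff_cond[OF N yS[OF i] \<mu>nn \<mu>sum lam0] unfolding hF_def f0_def q_def a_def .
    qed
    also have "\<dots> = ennreal ((\<Prod>i<m. q i) * exp (\<Sum>i<m. a i))"
    proof -
      have "(\<Prod>i<m. ennreal (q i) * ennreal (exp (a i))) = (\<Prod>i<m. ennreal (q i * exp (a i)))"
        by (intro prod.cong refl) (simp add: ennreal_mult q01)
      also have "\<dots> = ennreal (\<Prod>i<m. q i * exp (a i))"
        by (rule prod_ennreal) (simp add: q01)
      also have "(\<Prod>i<m. q i * exp (a i)) = (\<Prod>i<m. q i) * exp (\<Sum>i<m. a i)"
        by (simp add: prod.distrib exp_sum)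
      finally show ?thesis .
    qed
    finally show ?thesis .
  qed
  have intG: "(\<integral>\<^sup>+\<xi>. G j \<xi> \<partial>?KS) \<le> ennreal (exp (real m * b))" for j
  proof -
    have "(\<integral>\<^sup>+\<xi>. G j \<xi> \<partial>?KS) = (\<Prod>l<m. \<integral>\<^sup>+\<kappa>. hG l \<kappa> \<partial>?K)"
      unfolding G_def by (rule nn_integral_KS_prod[OF \<sigma>inj]) (use \<sigma>n hGm in auto)
    also have "\<dots> \<le> (\<Prod>l<m. ennreal (exp b))"
    proof (rule prod_mono_ennreal)
      fix l assume "l \<in> {..<m}"
      then have l: "l < m" by simp
      show "(\<integral>\<^sup>+\<kappa>. hG l \<kappa> \<partial>?K) \<le> ennreal (exp b)"
        using hoeff_free[OF N yS[OF l] lam0] unfolding hG_def b_def .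
    qed
    also have "\<dots> = ennreal (exp (\<Sum>l<m. b))"
      by (rule ennreal_exp_prod)
    also have "\<dots> = ennreal (exp (real m * b))" by simp
    finally show ?thesis .
  qed
  have pw: "indicator ?AB \<omega> \<le> (\<Sum>j<n. F (fst \<omega>) * G j (snd \<omega>))" if \<omega>: "\<omega> \<in> space ?\<Omega>" for \<omega>
  proof (cases "\<omega> \<in> ?AB")
    case False then show ?thesis by simp
  next
    case True
    define \<xi> where "\<xi> = fst \<omega>"
    define \<xi>' where "\<xi>' = snd \<omega>"
    have gy: "gen N p \<xi> m = y" and ts: "test_stat N n m y \<xi>' \<le> test_stat N n m y \<xi>"
      using True unfolding \<xi>_def \<xi>'_def by auto
    have sp: "\<xi> i \<in> space ?K" if "i < m" for i
      using \<omega> that nm space_KS[of \<xi> N n i] by (auto simp: space_pair_measure \<xi>_def)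
    have dec: "decode N (\<xi> i) (\<mu> i) = y ! i" if "i < m" for i using gy genB that by simp
    obtain j where j: "j < n" "test_stat N n m y \<xi>' = - (\<Sum>l<m. Tc N (\<xi>' ((j + l) mod n)) (y ! l))"
      using test_stat_attained[OF ly n1] by blast
    have le0: "test_stat N n m y \<xi> \<le> - (\<Sum>l<m. Tc N (\<xi> l) (y ! l))"
      by (rule test_stat_le0[OF ly nm m])
    define S0 where "S0 = (\<Sum>i<m. Tc N (\<xi> i) (y ! i))"
    define Sj where "Sj = (\<Sum>l<m. Tc N (\<xi>' (\<sigma> j l)) (y ! l))"
    have S: "S0 \<le> Sj" using ts j(2) le0 unfolding S0_def Sj_def \<sigma>_def by simp
    have FF: "F \<xi> = ennreal (exp (- lam * S0))"
    proof -
      have "F \<xi> = (\<Prod>i<m. ennreal (exp (- lam * Tc N (\<xi> i) (y ! i))))"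
        unfolding F_def hF_def f0_def using dec sp by (intro prod.cong refl) simp
      also have "\<dots> = ennreal (exp (\<Sum>i<m. - lam * Tc N (\<xi> i) (y ! i)))" by (rule ennreal_exp_prod)
      also have "(\<Sum>i<m. - lam * Tc N (\<xi> i) (y ! i)) = - lam * S0"
        unfolding S0_def by (simp add: sum_distrib_left)
      finally show ?thesis .
    qed
    have GG: "G j \<xi>' = ennreal (exp (lam * Sj))"
    proof -
      have "G j \<xi>' = ennreal (exp (\<Sum>l<m. lam * Tc N (\<xi>' (\<sigma> j l)) (y ! l)))"
        unfolding G_def hG_def by (rule ennreal_exp_prod)
      also have "(\<Sum>l<m. lam * Tc N (\<xi>' (\<sigma> j l)) (y ! l)) = lam * Sj"
        unfolding Sj_def by (simp add: sum_distrib_left)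
      finally show ?thesis .
    qed
    have "F \<xi> * G j \<xi>' = ennreal (exp (lam * (Sj - S0)))"
      unfolding FF GG by (simp add: ennreal_mult[symmetric] exp_add[symmetric] algebra_simps)
    moreover have "1 \<le> exp (lam * (Sj - S0))" using lam0 S by simp
    ultimately have one: "1 \<le> F \<xi> * G j \<xi>'" by simp
    have "F \<xi> * G j \<xi>' \<le> (\<Sum>j<n. F \<xi> * G j \<xi>')"
      by (rule member_le_sum) (use j(1) in auto)
    with one have le: "1 \<le> (\<Sum>j<n. F \<xi> * G j \<xi>')" by (rule order_trans)
    have ind1: "indicator ?AB \<omega> = (1::ennreal)" by (rule indicator_simps(1)) (rule True)
    show ?thesis unfolding ind1 using le unfolding \<xi>_def \<xi>'_def .
  qed
  have Pq0: "0 \<le> (\<Prod>i<m. q i)" by (rule prod_nonneg) (use q01 in simp)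
  define R where "R = (\<Prod>i<m. q i) * exp (\<Sum>i<m. a i) * exp (real m * b)"
  have mAB: "measure ?\<Omega> ?AB \<le> real n * R"
  proof (cases "?AB \<in> sets ?\<Omega>")
    case False
    then have "measure ?\<Omega> ?AB = 0" by (rule measure_notin_sets)
    moreover have "0 \<le> R" unfolding R_def using Pq0 by simp
    ultimately show ?thesis by simp
  next
    case True
    have "emeasure ?\<Omega> ?AB = (\<integral>\<^sup>+\<omega>. indicator ?AB \<omega> \<partial>?\<Omega>)" using True by simp
    also have "\<dots> \<le> (\<integral>\<^sup>+\<omega>. (\<Sum>j<n. F (fst \<omega>) * G j (snd \<omega>)) \<partial>?\<Omega>)"
      by (rule nn_integral_mono) (rule pw)
    also have "\<dots> = (\<Sum>j<n. \<integral>\<^sup>+\<omega>. F (fst \<omega>) * G j (snd \<omega>) \<partial>?\<Omega>)"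
      by (rule nn_integral_sum) (use Fm Gm in measurable)
    also have "\<dots> = (\<Sum>j<n. (\<integral>\<^sup>+\<xi>. F \<xi> \<partial>?KS) * (\<integral>\<^sup>+\<xi>. G j \<xi> \<partial>?KS))"
      by (intro sum.cong refl nn_integral_pair_prod[OF sfKS sfKS Fm Gm])
    also have "\<dots> \<le> (\<Sum>j<n. ennreal ((\<Prod>i<m. q i) * exp (\<Sum>i<m. a i)) * ennreal (exp (real m * b)))"
      by (intro sum_mono mult_mono intF intG) auto
    also have "\<dots> = ennreal (real n * R)"
      unfolding R_def using Pq0 by (simp add: ennreal_mult[symmetric] ennreal_of_nat_eq_real_of_nat mult.assoc)
    finally have "emeasure ?\<Omega> ?AB \<le> ennreal (real n * R)" .
    then show ?thesis
      unfolding measure_def using Pq0 by (intro enn2real_leI) (simp_all add: R_def)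
  qed
  have Rexp: "R = (\<Prod>i<m. q i) * exp (- 4 * real m * \<alpha>^2 * (C0 N)^2)"
  proof -
    have ai: "(\<Sum>i<m. a i) = (\<Sum>i<m. (- lam * C0 N) * (1 - q i) + lam^2/32)"
      by (intro sum.cong refl) (simp add: a_def algebra_simps)
    have "(\<Sum>i<m. (- lam * C0 N) * (1 - q i) + lam^2/32) = (\<Sum>i<m. (- lam * C0 N) * (1 - q i)) + real m * (lam^2/32)"
      by (simp only: sum.distrib sum_constant card_lessThan)
    also have "(\<Sum>i<m. (- lam * C0 N) * (1 - q i)) = (- lam * C0 N) * (\<Sum>i<m. 1 - q i)"
      by (rule sum_distrib_left[symmetric])
    finally have "(\<Sum>i<m. a i) + real m * b = (- lam * C0 N) * (\<Sum>i<m. 1 - q i) + real m * (lam^2/32) + real m * (lam^2 / 32)"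
      unfolding ai b_def by simp
    also have "\<dots> = - lam * C0 N * (\<Sum>i<m. 1 - q i) + real m * lam^2 / 16" by simp
    also have "\<dots> = - 4 * real m * \<alpha>^2 * (C0 N)^2"
      unfolding alpha[symmetric] lam_def by (simp add: power2_eq_square algebra_simps)
    finally show ?thesis unfolding R_def by (simp add: exp_add[symmetric] mult.assoc)
  qed
  have PBq: "0 < (\<Prod>i<m. q i)" using PB mB by simp
  have "\<P>(\<omega> in ?\<Omega>. test_stat N n m (gen N p (fst \<omega>) m) (snd \<omega>)
              \<le> test_stat N n m (gen N p (fst \<omega>) m) (fst \<omega>) \<bar> gen N p (fst \<omega>) m = y)
      = measure ?\<Omega> ?AB / measure ?\<Omega> ?B"
    unfolding cond_prob_def by simp
  also have "\<dots> \<le> real n * R / (\<Prod>i<m. q i)"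
    unfolding mB by (rule divide_right_mono[OF mAB]) (use PBq in simp)
  also have "\<dots> = real n * exp (- 4 * real m * \<alpha>^2 * (C0 N)^2)"
  proof -
    have P0: "(\<Prod>i<m. q i) \<noteq> 0" using PBq by linarith
    have "real n * ((\<Prod>i<m. q i) * exp (- 4 * real m * \<alpha>^2 * (C0 N)^2)) / (\<Prod>i<m. q i)
        = (\<Prod>i<m. q i) * (real n * exp (- 4 * real m * \<alpha>^2 * (C0 N)^2)) / (\<Prod>i<m. q i)"
      by (simp only: mult.left_commute)
    also have "\<dots> = real n * exp (- 4 * real m * \<alpha>^2 * (C0 N)^2)"
      by (rule nonzero_mult_div_cancel_left[OF P0])
    finally show ?thesis unfolding Rexp .
  qed
  also have "\<dots> \<le> 2 * real n * exp (- real m * (C0 N)\<^sup>2 * \<alpha>\<^sup>2 / 2)"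
  proof -
    have "0 \<le> real m * \<alpha>^2 * (C0 N)^2" by simp
    then have "exp (- 4 * real m * \<alpha>^2 * (C0 N)^2) \<le> exp (- real m * (C0 N)\<^sup>2 * \<alpha>\<^sup>2 / 2)"
      by (simp add: algebra_simps)
    then show ?thesis by (intro mult_mono) auto
  qed
  finally show ?thesis unfolding \<alpha>_def .
qed


end
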